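(* There exist $w>0$, an integer $n\ge 3$, a convex symmetric body $K\subseteq\mathbb{R}^n$ and $t\in(0,1)$ such that $w(K)=w$, $\gamma_n(K)=\gamma_n(C)$ where $C=B_2^2(0,w)\times\mathbb{R}^{n-2}$ (so that $w(C)=w$ as well), but \[ \gamma_n(tK)>\gamma_n(tC)=\gamma_2(B_2^2(0,tw)). \] In particular, it is false that every convex symmetric body with the same Gaussian measure and inradius as a cylinder $B_2^k(0,w)\times\mathbb{R}^l$ satisfies $\gamma(tK)\le\gamma_{k+l}(tC)$ for all $t\in(0,1)$.
   Context: $\gamma_n$ denotes the standard Gaussian probability measure on $\mathbb{R}^n$, $B_2^k(0,r)=\{x\in\mathbb{R}^k:|x|\le r\}$. A convex body is symmetric if $K=-K$. The inradius is $w(K)=\sup\{r>0:B(0,r)\subseteq K\}$ with $B(0,r)$ the Euclidean ball of radius $r$ centered at $0$. *)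

theory Defs
  imports "HOL-Analysis.Analysis" "HOL-Probability.Probability"
begin

text \<open>Euclidean space R^n is modelled as the functions nat => real that vanish
  at every coordinate i >= n (coordinates 0..n-1 are the n real coordinates).
  Topology on nat => real is the product topology, which restricted to this
  closed subspace coincides with the Euclidean topology.\<close>

definition Rn :: "nat \<Rightarrow> (nat \<Rightarrow> real) set" where
  "Rn n = {x. \<forall>i\<ge>n. x i = 0}"

definition enorm :: "nat \<Rightarrow> (nat \<Rightarrow> real) \<Rightarrow> real" where
  "enorm n x = sqrt (\<Sum>i<n. (x i)\<^sup>2)"

definition cball_n :: "nat \<Rightarrow> (nat \<Rightarrow> real) \<Rightarrow> real \<Rightarrow> (nat \<Rightarrow> real) set" where
  "cball_n n c r = {x \<in> Rn n. enorm n (\<lambda>i. x i - c i) \<le> r}"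

definition B2 :: "nat \<Rightarrow> real \<Rightarrow> (nat \<Rightarrow> real) set" where
  "B2 n r = cball_n n (\<lambda>_. 0) r"

definition dil :: "real \<Rightarrow> (nat \<Rightarrow> real) set \<Rightarrow> (nat \<Rightarrow> real) set" where
  "dil t K = (\<lambda>x. \<lambda>i. t * x i) ` K"

definition convex_n :: "nat \<Rightarrow> (nat \<Rightarrow> real) set \<Rightarrow> bool" where
  "convex_n n K \<longleftrightarrow> K \<subseteq> Rn n \<and>
     (\<forall>x\<in>K. \<forall>y\<in>K. \<forall>u::real. 0 \<le> u \<and> u \<le> 1 \<longrightarrow> (\<lambda>i. u * x i + (1 - u) * y i) \<in> K)"

definition convex_body :: "nat \<Rightarrow> (nat \<Rightarrow> real) set \<Rightarrow> bool" where
  "convex_body n K \<longleftrightarrow> convex_n n K \<and> closed K \<and> (\<exists>c\<in>K. \<exists>r>0. cball_n n c r \<subseteq> K)"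

definition symmetric_set :: "(nat \<Rightarrow> real) set \<Rightarrow> bool" where
  "symmetric_set K \<longleftrightarrow> uminus ` K = K"

definition inradius :: "nat \<Rightarrow> (nat \<Rightarrow> real) set \<Rightarrow> real" where
  "inradius n K = Sup {r. r > 0 \<and> B2 n r \<subseteq> K}"

definition gauss_meas :: "nat \<Rightarrow> (nat \<Rightarrow> real) measure" where
  "gauss_meas n = PiM {..<n} (\<lambda>_. density lborel std_normal_density)"

definition gamma :: "nat \<Rightarrow> (nat \<Rightarrow> real) set \<Rightarrow> real" where
  "gamma n A = measure (gauss_meas n)
     {x \<in> space (gauss_meas n). (\<lambda>i. if i < n then x i else 0) \<in> A}"

definition cyl :: "nat \<Rightarrow> real \<Rightarrow> (nat \<Rightarrow> real) set" where
  "cyl n w = {x \<in> Rn n. enorm 2 x \<le> w}"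

end

theory Submission
  imports Defs
begin


lemma inner_C:
  fixes r c :: real assumes r: "0 \<le> r" and c: "0 < c"
  shows "(\<integral>\<^sup>+x. ennreal (x * exp (- (x\<^sup>2 * c) / 2)) * indicator {0<..} x * indicator {..r\<^sup>2} (x\<^sup>2 * c) \<partial>lborel)
         = ennreal ((1 - exp (- r\<^sup>2 / 2)) / c)"
proof -
  define u where "u = r / sqrt c"
  have u0: "0 \<le> u" using r c by (simp add: u_def)
  have iff: "x\<^sup>2 * c \<le> r\<^sup>2 \<longleftrightarrow> x \<le> u" if "0 < x" for x
  proof -
    have "x\<^sup>2 * c \<le> r\<^sup>2 \<longleftrightarrow> (x * sqrt c)\<^sup>2 \<le> r\<^sup>2" using c by (simp add: power_mult_distrib)
    also have "\<dots> \<longleftrightarrow> x * sqrt c \<le> r" using r that c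
      by (meson power2_le_imp_le power_mono mult_nonneg_nonneg less_imp_le real_sqrt_ge_zero)
    also have "\<dots> \<longleftrightarrow> x \<le> u" using c by (simp add: u_def pos_le_divide_eq)
    finally show ?thesis .
  qed
  have "(\<integral>\<^sup>+x. ennreal (x * exp (- (x\<^sup>2 * c) / 2)) * indicator {0<..} x * indicator {..r\<^sup>2} (x\<^sup>2 * c) \<partial>lborel)
      = (\<integral>\<^sup>+x. ennreal (x * exp (- (x\<^sup>2 * c) / 2)) * indicator {0..u} x \<partial>lborel)"
    apply (intro nn_integral_cong_AE)
    using AE_lborel_singleton[of 0]
    apply (rule eventually_mono)
    using iff by (auto split: split_indicator)
  also have "\<dots> = ennreal ((\<lambda>x. - exp (- (x\<^sup>2 * c) / 2) / c) u - (\<lambda>x. - exp (- (x\<^sup>2 * c) / 2) / c) 0)"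
    apply (rule nn_integral_FTC_Icc)
    using u0 c by (auto intro!: derivative_eq_intros simp: field_simps)
  also have "u\<^sup>2 * c = r\<^sup>2" using c r by (simp add: u_def power_divide)
  then have "(\<lambda>x. - exp (- (x\<^sup>2 * c) / 2) / c) u - (\<lambda>x. - exp (- (x\<^sup>2 * c) / 2) / c) 0
      = (1 - exp (- r\<^sup>2 / 2)) / c" using c by (simp add: field_simps)
  finally show ?thesis .
qed


lemma quad:
  fixes r :: real assumes r: "0 \<le> r"
  shows "(\<integral>\<^sup>+x. \<integral>\<^sup>+y. ennreal (exp (- (x\<^sup>2 + y\<^sup>2) / 2)) * indicator {0<..} x * indicator {0<..} y
            * indicator {..r\<^sup>2} (x\<^sup>2 + y\<^sup>2) \<partial>lborel \<partial>lborel)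
       = ennreal (pi / 2 * (1 - exp (- r\<^sup>2 / 2)))"
proof -
  let ?G = "\<lambda>x s. ennreal (x * exp (- (x\<^sup>2 * (1 + s\<^sup>2)) / 2)) * indicator {0<..} x * indicator {0<..} s
            * indicator {..r\<^sup>2} (x\<^sup>2 * (1 + s\<^sup>2))"
  have step1: "(\<integral>\<^sup>+y. ennreal (exp (- (x\<^sup>2 + y\<^sup>2) / 2)) * indicator {0<..} x * indicator {0<..} y
            * indicator {..r\<^sup>2} (x\<^sup>2 + y\<^sup>2) \<partial>lborel) = (\<integral>\<^sup>+s. ?G x s \<partial>lborel)" for x :: real
  proof (cases "0 < x")
    case True
    have "(\<integral>\<^sup>+y. ennreal (exp (- (x\<^sup>2 + y\<^sup>2) / 2)) * indicator {0<..} x * indicator {0<..} y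
            * indicator {..r\<^sup>2} (x\<^sup>2 + y\<^sup>2) \<partial>lborel)
        = ennreal \<bar>x\<bar> * (\<integral>\<^sup>+s. ennreal (exp (- (x\<^sup>2 + (0 + x * s)\<^sup>2) / 2)) * indicator {0<..} x * indicator {0<..} (0 + x * s)
            * indicator {..r\<^sup>2} (x\<^sup>2 + (0 + x * s)\<^sup>2) \<partial>lborel)"
      by (rule nn_integral_real_affine) (use True in auto)
    also have "\<dots> = (\<integral>\<^sup>+s. ennreal \<bar>x\<bar> * (ennreal (exp (- (x\<^sup>2 + (0 + x * s)\<^sup>2) / 2)) * indicator {0<..} x * indicator {0<..} (0 + x * s)
            * indicator {..r\<^sup>2} (x\<^sup>2 + (0 + x * s)\<^sup>2)) \<partial>lborel)"
      by (rule nn_integral_cmult[symmetric]) measurable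
    also have "\<dots> = (\<integral>\<^sup>+s. ?G x s \<partial>lborel)"
    proof (intro nn_integral_cong)
      fix s :: real
      have e: "x\<^sup>2 + (0 + x * s)\<^sup>2 = x\<^sup>2 * (1 + s\<^sup>2)" by (simp add: algebra_simps power_mult_distrib)
      have p: "0 < x * s \<longleftrightarrow> 0 < s" using True by (simp add: zero_less_mult_iff)
      show "ennreal \<bar>x\<bar> * (ennreal (exp (- (x\<^sup>2 + (0 + x * s)\<^sup>2) / 2)) * indicator {0<..} x * indicator {0<..} (0 + x * s)
            * indicator {..r\<^sup>2} (x\<^sup>2 + (0 + x * s)\<^sup>2)) = ?G x s"
        unfolding e using True p by (auto simp: ennreal_mult[symmetric] split: split_indicator)
    qed
    finally show ?thesis .
  qed simp
  have "(\<integral>\<^sup>+x. \<integral>\<^sup>+y. ennreal (exp (- (x\<^sup>2 + y\<^sup>2) / 2)) * indicator {0<..} x * indicator {0<..} y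
            * indicator {..r\<^sup>2} (x\<^sup>2 + y\<^sup>2) \<partial>lborel \<partial>lborel) = (\<integral>\<^sup>+x. \<integral>\<^sup>+s. ?G x s \<partial>lborel \<partial>lborel)"
    using step1 by simp
  also have "\<dots> = (\<integral>\<^sup>+s. \<integral>\<^sup>+x. ?G x s \<partial>lborel \<partial>lborel)"
    by (rule lborel_pair.Fubini') measurable
  also have "\<dots> = (\<integral>\<^sup>+s. ennreal ((1 - exp (- r\<^sup>2 / 2)) / (1 + s\<^sup>2)) * indicator {0<..} s \<partial>lborel)"
  proof (intro nn_integral_cong)
    fix s :: real
    have "(\<integral>\<^sup>+x. ?G x s \<partial>lborel) = (\<integral>\<^sup>+x. (ennreal (x * exp (- (x\<^sup>2 * (1 + s\<^sup>2)) / 2)) * indicator {0<..} x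
            * indicator {..r\<^sup>2} (x\<^sup>2 * (1 + s\<^sup>2))) * indicator {0<..} s \<partial>lborel)"
      by (intro nn_integral_cong) (simp add: ac_simps)
    also have "\<dots> = (\<integral>\<^sup>+x. ennreal (x * exp (- (x\<^sup>2 * (1 + s\<^sup>2)) / 2)) * indicator {0<..} x
            * indicator {..r\<^sup>2} (x\<^sup>2 * (1 + s\<^sup>2)) \<partial>lborel) * indicator {0<..} s"
      by (rule nn_integral_multc) measurable
    also have "\<dots> = ennreal ((1 - exp (- r\<^sup>2 / 2)) / (1 + s\<^sup>2)) * indicator {0<..} s"
      by (subst inner_C[OF r]) (auto intro: add_pos_nonneg)
    finally show "(\<integral>\<^sup>+x. ?G x s \<partial>lborel) = ennreal ((1 - exp (- r\<^sup>2 / 2)) / (1 + s\<^sup>2)) * indicator {0<..} s" .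
  qed
  also have "\<dots> = (\<integral>\<^sup>+s. ennreal ((1 - exp (- r\<^sup>2 / 2)) / (1 + s\<^sup>2)) * indicator {0..} s \<partial>lborel)"
    apply (intro nn_integral_cong_AE)
    using AE_lborel_singleton[of 0]
    apply (rule eventually_mono)
    by (auto split: split_indicator)
  also have "\<dots> = ennreal ((1 - exp (- r\<^sup>2 / 2)) * (pi / 2) - (1 - exp (- r\<^sup>2 / 2)) * arctan 0)"
  proof (rule nn_integral_FTC_atLeast)
    show "((\<lambda>a. (1 - exp (- r\<^sup>2 / 2)) * arctan a) \<longlongrightarrow> (1 - exp (- r\<^sup>2 / 2)) * (pi / 2)) at_top"
      by (intro tendsto_intros) (simp_all add: tendsto_arctan_at_top)
  qed (auto intro!: derivative_eq_intros simp: add_nonneg_eq_0_iff field_simps power2_eq_square)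
  also have "\<dots> = ennreal (pi / 2 * (1 - exp (- r\<^sup>2 / 2)))" by (simp add: mult.commute)
  finally show ?thesis .
qed


lemma nn_even:
  fixes h :: "real \<Rightarrow> ennreal"
  assumes [measurable]: "h \<in> borel_measurable borel" and ev: "\<And>x. h (- x) = h x"
  shows "(\<integral>\<^sup>+x. h x \<partial>lborel) = 2 * (\<integral>\<^sup>+x. h x * indicator {0<..} x \<partial>lborel)"
proof -
  have "(\<integral>\<^sup>+x. h x \<partial>lborel) = (\<integral>\<^sup>+x. h x * indicator {0<..} x + h x * indicator {..<0} x \<partial>lborel)"
    apply (intro nn_integral_cong_AE)
    using AE_lborel_singleton[of 0]
    apply (rule eventually_mono)
    by (auto split: split_indicator)
  also have "\<dots> = (\<integral>\<^sup>+x. h x * indicator {0<..} x \<partial>lborel) + (\<integral>\<^sup>+x. h x * indicator {..<0} x \<partial>lborel)"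
    by (rule nn_integral_add) measurable
  also have "(\<integral>\<^sup>+x. h x * indicator {..<0} x \<partial>lborel) = ennreal \<bar>-1\<bar> * (\<integral>\<^sup>+x. h (0 + (-1) * x) * indicator {..<0} (0 + (-1) * x) \<partial>lborel)"
    by (rule nn_integral_real_affine) auto
  also have "\<dots> = (\<integral>\<^sup>+x. h x * indicator {0<..} x \<partial>lborel)"
    by (auto simp: ev intro!: nn_integral_cong split: split_indicator)
  finally show ?thesis by (simp add: mult_2)
qed

lemma disc:
  fixes r :: real assumes r: "0 \<le> r"
  shows "(\<integral>\<^sup>+x. \<integral>\<^sup>+y. ennreal (std_normal_density x * std_normal_density y) * indicator {..r\<^sup>2} (x\<^sup>2 + y\<^sup>2) \<partial>lborel \<partial>lborel)
       = ennreal (1 - exp (- r\<^sup>2 / 2))"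
proof -
  let ?g = "\<lambda>x y. ennreal (std_normal_density x * std_normal_density y) * indicator {..r\<^sup>2} (x\<^sup>2 + y\<^sup>2)"
  have phi: "std_normal_density x * std_normal_density y = (1 / (2 * pi)) * exp (- (x\<^sup>2 + y\<^sup>2) / 2)" for x y :: real
    by (simp add: std_normal_density_def field_simps mult_exp_exp real_sqrt_mult[symmetric])
  have in1: "(\<integral>\<^sup>+y. ?g x y \<partial>lborel) = 2 * (\<integral>\<^sup>+y. ?g x y * indicator {0<..} y \<partial>lborel)" for x
    by (rule nn_even) (auto simp: std_normal_density_def)
  have "(\<integral>\<^sup>+x. \<integral>\<^sup>+y. ?g x y \<partial>lborel \<partial>lborel) = (\<integral>\<^sup>+x. 2 * (\<integral>\<^sup>+y. ?g x y * indicator {0<..} y \<partial>lborel) \<partial>lborel)"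
    by (simp add: in1)
  also have "\<dots> = 2 * (\<integral>\<^sup>+x. (\<integral>\<^sup>+y. ?g x y * indicator {0<..} y \<partial>lborel) \<partial>lborel)"
    by (rule nn_integral_cmult) measurable
  also have "(\<integral>\<^sup>+x. (\<integral>\<^sup>+y. ?g x y * indicator {0<..} y \<partial>lborel) \<partial>lborel)
      = 2 * (\<integral>\<^sup>+x. (\<integral>\<^sup>+y. ?g x y * indicator {0<..} y \<partial>lborel) * indicator {0<..} x \<partial>lborel)"
    by (rule nn_even) (measurable, auto simp: std_normal_density_def)
  also have "(\<integral>\<^sup>+x. (\<integral>\<^sup>+y. ?g x y * indicator {0<..} y \<partial>lborel) * indicator {0<..} x \<partial>lborel)
      = (\<integral>\<^sup>+x. (\<integral>\<^sup>+y. ennreal (1 / (2 * pi)) * (ennreal (exp (- (x\<^sup>2 + y\<^sup>2) / 2)) * indicator {0<..} x * indicator {0<..} y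
            * indicator {..r\<^sup>2} (x\<^sup>2 + y\<^sup>2)) \<partial>lborel) \<partial>lborel)"
    by (subst nn_integral_multc[symmetric], measurable)
       (auto intro!: nn_integral_cong simp: phi ennreal_mult[symmetric] split: split_indicator)
  also have "\<dots> = (\<integral>\<^sup>+x. ennreal (1 / (2 * pi)) * (\<integral>\<^sup>+y. (ennreal (exp (- (x\<^sup>2 + y\<^sup>2) / 2)) * indicator {0<..} x * indicator {0<..} y
            * indicator {..r\<^sup>2} (x\<^sup>2 + y\<^sup>2)) \<partial>lborel) \<partial>lborel)"
    by (intro nn_integral_cong nn_integral_cmult) measurable
  also have "\<dots> = ennreal (1 / (2 * pi)) * (\<integral>\<^sup>+x. (\<integral>\<^sup>+y. (ennreal (exp (- (x\<^sup>2 + y\<^sup>2) / 2)) * indicator {0<..} x * indicator {0<..} y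
            * indicator {..r\<^sup>2} (x\<^sup>2 + y\<^sup>2)) \<partial>lborel) \<partial>lborel)"
    by (rule nn_integral_cmult) measurable
  also have "\<dots> = ennreal (1 / (2 * pi)) * ennreal (pi / 2 * (1 - exp (- r\<^sup>2 / 2)))"
    by (simp only: quad[OF r])
  finally have "(\<integral>\<^sup>+x. \<integral>\<^sup>+y. ?g x y \<partial>lborel \<partial>lborel) = 2 * (2 * (ennreal (1 / (2 * pi)) * ennreal (pi / 2 * (1 - exp (- r\<^sup>2 / 2)))))" .
  also have "\<dots> = ennreal (1 - exp (- r\<^sup>2 / 2))"
    by (simp add: ennreal_mult[symmetric] field_simps del: ennreal_numeral flip: ennreal_numeral)
  finally show ?thesis .
qed


abbreviation "NN \<equiv> density lborel (\<lambda>x. ennreal (std_normal_density x))"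

lemma gauss_meas_eq: "gauss_meas n = PiM {..<n} (\<lambda>_. NN)"
  by (simp add: gauss_meas_def)

lemma NN_prob: "prob_space NN"
  by (rule prob_space_normal_density) simp

lemma sets_NN[simp, measurable_cong]: "sets NN = sets borel" by simp

interpretation NN: prob_space NN by (rule NN_prob)

lemma NNP_psf: "product_sigma_finite (\<lambda>_::nat. NN)"
  unfolding product_sigma_finite_def by (simp add: NN.sigma_finite_measure_axioms)

interpretation NNP: product_sigma_finite "\<lambda>_::nat. NN" by (rule NNP_psf)

lemma comp_meas: "i \<in> I \<Longrightarrow> (\<lambda>x. x i) \<in> PiM I (\<lambda>_. NN) \<rightarrow>\<^sub>M borel"
proof -
  assume "i \<in> I"
  then have "(\<lambda>x. x i) \<in> PiM I (\<lambda>_. NN) \<rightarrow>\<^sub>M NN" by (rule measurable_component_singleton)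
  moreover have "(PiM I (\<lambda>_. NN) \<rightarrow>\<^sub>M NN) = (PiM I (\<lambda>_. NN) \<rightarrow>\<^sub>M borel)"
    by (rule measurable_cong_sets) simp_all
  ultimately show ?thesis by simp
qed

lemma meas3:
  fixes F :: "real \<Rightarrow> real \<Rightarrow> real \<Rightarrow> ennreal"
  assumes mF: "(\<lambda>p. F (fst p) (fst (snd p)) (snd (snd p))) \<in> borel_measurable (borel \<Otimes>\<^sub>M borel \<Otimes>\<^sub>M borel)"
  and that: "0 \<in> (I::nat set)" "1 \<in> I" "2 \<in> I"
  shows "(\<lambda>x. F (x 0) (x 1) (x 2)) \<in> borel_measurable (PiM I (\<lambda>_. NN))"
  proof -
    have "(\<lambda>x. (x 0, x 1, x 2)) \<in> PiM I (\<lambda>_. NN) \<rightarrow>\<^sub>M (borel \<Otimes>\<^sub>M borel \<Otimes>\<^sub>M borel)"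
      by (intro measurable_Pair comp_meas that)
    from measurable_comp[OF this mF] show ?thesis by (simp add: comp_def)
  qed
lemma meas2:
  fixes F :: "real \<Rightarrow> real \<Rightarrow> real \<Rightarrow> ennreal"
  assumes mF: "(\<lambda>p. F (fst p) (fst (snd p)) (snd (snd p))) \<in> borel_measurable (borel \<Otimes>\<^sub>M borel \<Otimes>\<^sub>M borel)"
  and that: "1 \<in> (I::nat set)" "2 \<in> I"
  shows "(\<lambda>x. F a (x 1) (x 2)) \<in> borel_measurable (PiM I (\<lambda>_. NN))"
  proof -
    have "(\<lambda>x. (a, x 1, x 2)) \<in> PiM I (\<lambda>_. NN) \<rightarrow>\<^sub>M (borel \<Otimes>\<^sub>M borel \<Otimes>\<^sub>M borel)"
      by (intro measurable_Pair comp_meas that measurable_const) simp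
    from measurable_comp[OF this mF] show ?thesis by (simp add: comp_def)
  qed

lemma meas1:
  fixes F :: "real \<Rightarrow> real \<Rightarrow> real \<Rightarrow> ennreal"
  assumes mF: "(\<lambda>p. F (fst p) (fst (snd p)) (snd (snd p))) \<in> borel_measurable (borel \<Otimes>\<^sub>M borel \<Otimes>\<^sub>M borel)"
  shows "(\<lambda>c. F a b c) \<in> borel_measurable NN"
proof -
  have "(\<lambda>c::real. (a, b, c)) \<in> NN \<rightarrow>\<^sub>M (borel \<Otimes>\<^sub>M (borel \<Otimes>\<^sub>M borel))"
    by measurable
  from measurable_comp[OF this mF] show ?thesis by (simp add: comp_def)
qed

lemma gm3_Pi:
  fixes F :: "real \<Rightarrow> real \<Rightarrow> real \<Rightarrow> ennreal"
  assumes mF: "(\<lambda>p. F (fst p) (fst (snd p)) (snd (snd p))) \<in> borel_measurable (borel \<Otimes>\<^sub>M borel \<Otimes>\<^sub>M borel)"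
  shows "(\<integral>\<^sup>+x. F (x 0) (x 1) (x 2) \<partial>gauss_meas 3) = (\<integral>\<^sup>+a. (\<integral>\<^sup>+b. (\<integral>\<^sup>+c. F a b c \<partial>NN) \<partial>NN) \<partial>NN)"
proof -
  have e: "{..<3::nat} = insert 0 (insert 1 {2})" by auto
  have "(\<integral>\<^sup>+x. F (x 0) (x 1) (x 2) \<partial>gauss_meas 3) = (\<integral>\<^sup>+x. F (x 0) (x 1) (x 2) \<partial>PiM (insert (0::nat) (insert 1 {2})) (\<lambda>_. NN))"
    unfolding gauss_meas_eq e ..
  also have "\<dots> = (\<integral>\<^sup>+a. (\<integral>\<^sup>+x. F ((x(0:=a)) 0) ((x(0:=a)) 1) ((x(0:=a)) 2) \<partial>PiM (insert (1::nat) {2}) (\<lambda>_. NN)) \<partial>NN)"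
    by (rule NNP.product_nn_integral_insert_rev) (simp, simp, rule meas3[OF mF], auto)
  also have "\<dots> = (\<integral>\<^sup>+a. (\<integral>\<^sup>+x. F a (x 1) (x 2) \<partial>PiM (insert (1::nat) {2}) (\<lambda>_. NN)) \<partial>NN)"
    by (simp only: fun_upd_same fun_upd_other zero_neq_one zero_neq_numeral)
  also have "\<dots> = (\<integral>\<^sup>+a. (\<integral>\<^sup>+b. (\<integral>\<^sup>+x. F a ((x(1:=b)) 1) ((x(1:=b)) 2) \<partial>PiM {2::nat} (\<lambda>_. NN)) \<partial>NN) \<partial>NN)"
    by (intro nn_integral_cong NNP.product_nn_integral_insert_rev) (simp, simp, rule meas2[OF mF], auto)
  also have "\<dots> = (\<integral>\<^sup>+a. (\<integral>\<^sup>+b. (\<integral>\<^sup>+x. F a b (x 2) \<partial>PiM {2::nat} (\<lambda>_. NN)) \<partial>NN) \<partial>NN)"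
    by (simp del: nn_integral_const)
  also have "\<dots> = (\<integral>\<^sup>+a. (\<integral>\<^sup>+b. (\<integral>\<^sup>+c. F a b c \<partial>NN) \<partial>NN) \<partial>NN)"
    by (intro nn_integral_cong NNP.product_nn_integral_singleton meas1[OF mF])
  finally show ?thesis .
qed


abbreviation "phi \<equiv> std_normal_density"

lemma phi_eq: "phi x = exp (- x\<^sup>2 / 2) / sqrt (2 * pi)"
  by (simp add: std_normal_density_def)

lemma phi_even: "phi (- x) = phi x" by (simp add: phi_eq)

definition Phi :: "real \<Rightarrow> real" where "Phi x = measure NN {..x}"

interpretation NNR: real_distribution NN
  by unfold_locales simp

lemma emeasure_NN: "S \<in> sets borel \<Longrightarrow> emeasure NN S = (\<integral>\<^sup>+x. ennreal (phi x) * indicator S x \<partial>lborel)"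
  by (subst emeasure_density) (auto intro!: nn_integral_cong simp: mult.commute)

lemma NN_singleton: "measure NN {x} = 0"
proof -
  have "emeasure NN {x} = (\<integral>\<^sup>+y. ennreal (phi y) * indicator {x} y \<partial>lborel)"
    by (rule emeasure_NN) simp
  also have "\<dots> = (\<integral>\<^sup>+y. ennreal (phi x) * indicator {x} y \<partial>lborel)"
    by (intro nn_integral_cong) (auto split: split_indicator)
  also have "\<dots> = 0" by (subst nn_integral_cmult_indicator) auto
  finally show ?thesis by (simp add: measure_def)
qed

lemma Phi_cont: "isCont Phi x"
  using NNR.isCont_cdf[of x] NN_singleton unfolding Phi_def cdf_def by simp

lemma NN_split: "A \<in> sets borel \<Longrightarrow> B \<in> sets borel \<Longrightarrow> A \<inter> B = {} \<Longrightarrow> measure NN (A \<union> B) = measure NN A + measure NN B"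
  by (rule NN.finite_measure_Union) auto

lemma Phi_lt: "measure NN {..<c} = Phi c"
proof -
  have "{..<c} \<union> {c} = {..c}" by auto
  moreover have "{..<c} \<inter> {c} = {}" by auto
  ultimately show ?thesis using NN_split[of "{..<c}" "{c}"] NN_singleton[of c] by (simp add: Phi_def)
qed

lemma Phi_Icc: "c \<le> d \<Longrightarrow> measure NN {c..d} = Phi d - Phi c"
proof -
  assume cd: "c \<le> d"
  have "{..<c} \<union> {c..d} = {..d}" using cd by auto
  moreover have "{..<c} \<inter> {c..d} = {}" by auto
  ultimately show ?thesis using NN_split[of "{..<c}" "{c..d}"] Phi_lt[of c] by (simp add: Phi_def)
qed

lemma Phi_Ici: "measure NN {c..} = 1 - Phi c"
proof -
  have "{..<c} \<union> {c..} = UNIV" by auto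
  moreover have "measure NN UNIV = 1" using NN.prob_space by simp
  moreover have "{..<c} \<inter> {c..} = {}" by auto
  ultimately show ?thesis using NN_split[of "{..<c}" "{c..}"] Phi_lt[of c] by simp
qed

lemma NN_reflect: "S \<in> sets borel \<Longrightarrow> emeasure NN (uminus ` S) = emeasure NN S"
proof -
  assume S: "S \<in> sets borel"
  have S': "uminus ` S \<in> sets borel"
  proof -
    have "uminus ` S = uminus -` S" by (force simp: image_iff)
    moreover have "uminus -` S \<in> sets borel" by (intro measurable_sets_borel[OF _ S]) measurable
    ultimately show ?thesis by simp
  qed
  have "emeasure NN (uminus ` S) = (\<integral>\<^sup>+x. ennreal (phi x) * indicator (uminus ` S) x \<partial>lborel)"
    by (rule emeasure_NN[OF S'])
  also have "\<dots> = ennreal \<bar>-1\<bar> * (\<integral>\<^sup>+x. ennreal (phi (0 + (-1) * x)) * indicator (uminus ` S) (0 + (-1) * x) \<partial>lborel)"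
    by (rule nn_integral_real_affine) (use S' in auto)
  also have "\<dots> = (\<integral>\<^sup>+x. ennreal (phi (0 + (-1) * x)) * indicator (uminus ` S) (0 + (-1) * x) \<partial>lborel)"
    by simp
  also have "\<dots> = (\<integral>\<^sup>+x. ennreal (phi x) * indicator S x \<partial>lborel)"
    by (intro nn_integral_cong) (auto simp: phi_even image_iff split: split_indicator)
  also have "\<dots> = emeasure NN S" by (rule emeasure_NN[OF S, symmetric])
  finally show ?thesis .
qed

lemma Phi_neg: "Phi (- x) = 1 - Phi x"
proof -
  have "uminus ` {x..} = {..-x}" by (auto simp: image_iff intro: exI[where x="- _"])
  then have "emeasure NN {..-x} = emeasure NN {x..}" using NN_reflect[of "{x..}"] by simp
  then have "measure NN {..-x} = measure NN {x..}" by (simp add: measure_def)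
  then show ?thesis by (simp add: Phi_def[of "-x"] Phi_Ici)
qed

lemma Phi_0: "Phi 0 = 1/2" using Phi_neg[of 0] by simp


lemma phi_lim: "(phi \<longlongrightarrow> 0) at_top"
proof -
  have "filterlim (\<lambda>s::real. s ^ 2) at_top at_top"
    by (rule filterlim_pow_at_top) (simp_all add: filterlim_ident)
  from filterlim_tendsto_pos_mult_at_top[OF tendsto_const[of "1/2"] _ this]
  have "filterlim (\<lambda>s::real. s\<^sup>2 / 2) at_top at_top" by simp
  then have "filterlim (\<lambda>s::real. - (s\<^sup>2 / 2)) at_bot at_top"
    using filterlim_uminus_at_bot_at_top filterlim_compose by blast
  then have "((\<lambda>s::real. exp (- (s\<^sup>2 / 2))) \<longlongrightarrow> 0) at_top"
    by (rule filterlim_compose[OF exp_at_bot])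
  then have "((\<lambda>s::real. exp (- (s\<^sup>2 / 2)) / sqrt (2 * pi)) \<longlongrightarrow> 0 / sqrt (2 * pi)) at_top"
    by (intro tendsto_divide) auto
  moreover have "phi = (\<lambda>s. exp (- (s\<^sup>2 / 2)) / sqrt (2 * pi))" by (rule ext) (simp add: phi_eq)
  ultimately show ?thesis by simp
qed

lemma phi_deriv: "(phi has_real_derivative (- x * phi x)) (at x)"
  unfolding phi_eq by (auto intro!: derivative_eq_intros simp: field_simps)

lemma tail_upper:
  assumes x: "0 < x"
  shows "1 - Phi x \<le> phi x / x"
proof -
  have "emeasure NN {x..} = (\<integral>\<^sup>+s. ennreal (phi s) * indicator {x..} s \<partial>lborel)"
    by (rule emeasure_NN) simp
  also have "\<dots> \<le> (\<integral>\<^sup>+s. ennreal (s * phi s / x) * indicator {x..} s \<partial>lborel)"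
  proof (intro nn_integral_mono)
    fix s show "ennreal (phi s) * indicator {x..} s \<le> ennreal (s * phi s / x) * indicator {x..} s"
    proof (cases "x \<le> s")
      case True
      have "phi s \<le> s * phi s / x" using True x by (simp add: field_simps mult_right_mono)
      then show ?thesis using True by (simp add: ennreal_leI)
    qed simp
  qed
  also have "\<dots> = ennreal (0 - (- phi x / x))"
  proof (rule nn_integral_FTC_atLeast[where F="\<lambda>s. - phi s / x" and T=0])
    show "((\<lambda>s. - phi s / x) \<longlongrightarrow> 0) at_top"
      using tendsto_divide[OF tendsto_minus[OF phi_lim] tendsto_const[of x]] x by simp
  next
    fix s assume "x \<le> s"
    show "((\<lambda>s. - phi s / x) has_real_derivative s * phi s / x) (at s)"
      using phi_deriv[of s] x by (auto intro!: derivative_eq_intros)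
  next
    fix s assume "x \<le> s"
    show "0 \<le> s * phi s / x" using \<open>x \<le> s\<close> x by simp
  qed (simp add: phi_eq)
  finally have "emeasure NN {x..} \<le> ennreal (phi x / x)" by simp
  then have "measure NN {x..} \<le> phi x / x"
    using x by (simp add: measure_def enn2real_leI)
  then show ?thesis by (simp add: Phi_Ici)
qed


lemma tail_lower:
  assumes x: "2 \<le> x"
  shows "phi x * (1 / x - 1 / x ^ 3) \<le> 1 - Phi x"
proof -
  have x0: "0 < x" using x by simp
  let ?F = "\<lambda>s. - (phi s * (1 / s - 1 / s ^ 3))"
  let ?f = "\<lambda>s. phi s * (1 - 3 / s ^ 4)"
  have "ennreal (0 - ?F x) = (\<integral>\<^sup>+s. ennreal (?f s) * indicator {x..} s \<partial>lborel)"
  proof (rule nn_integral_FTC_atLeast[where F="?F" and T=0, symmetric])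
    have l: "((\<lambda>s::real. 1 / s - 1 / s ^ 3) \<longlongrightarrow> 0 - 0) at_top"
      by (intro tendsto_diff tendsto_divide_0[OF tendsto_const] filterlim_at_top_imp_at_infinity filterlim_pow_at_top filterlim_ident) auto
    show "(?F \<longlongrightarrow> 0) at_top"
      using tendsto_minus[OF tendsto_mult[OF phi_lim l]] by simp
  next
    fix s assume s: "x \<le> s"
    then have s0: "s \<noteq> 0" using x0 by simp
    have d1: "((\<lambda>s. 1 / s - 1 / s ^ 3) has_real_derivative (- 1 / s\<^sup>2 + 3 / s ^ 4)) (at s)"
      using s0 by (auto intro!: derivative_eq_intros simp: field_simps eval_nat_numeral)
    have "(?F has_real_derivative - ((- s * phi s) * (1 / s - 1 / s ^ 3) + (- 1 / s\<^sup>2 + 3 / s ^ 4) * phi s)) (at s)"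
      by (intro DERIV_minus DERIV_mult phi_deriv d1)
    moreover have "- ((- s * phi s) * (1 / s - 1 / s ^ 3) + (- 1 / s\<^sup>2 + 3 / s ^ 4) * phi s) = ?f s"
      using s0 by (simp add: field_simps eval_nat_numeral)
    ultimately show "(?F has_real_derivative ?f s) (at s)" by simp
  next
    fix s assume s: "x \<le> s"
    have "2 ^ 4 \<le> s ^ 4" using s x by (intro power_mono) auto
    then have "3 / s ^ 4 \<le> 1" using s x by (simp add: divide_le_eq)
    then show "0 \<le> ?f s" by simp
  qed (simp add: phi_eq)
  also have "\<dots> \<le> (\<integral>\<^sup>+s. ennreal (phi s) * indicator {x..} s \<partial>lborel)"
  proof (intro nn_integral_mono)
    fix s show "ennreal (?f s) * indicator {x..} s \<le> ennreal (phi s) * indicator {x..} s"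
    proof (cases "x \<le> s")
      case True
      have "0 < s ^ 4" using True x0 by simp
      then have "0 \<le> 3 / s ^ 4" by simp
      then have "?f s \<le> phi s" by (intro mult_left_le) auto
      then show ?thesis using True by (simp add: ennreal_leI)
    qed simp
  qed
  also have "\<dots> = emeasure NN {x..}" by (rule emeasure_NN[symmetric]) simp
  finally have "ennreal (0 - ?F x) \<le> emeasure NN {x..}" .
  then have "0 - ?F x \<le> measure NN {x..}"
    using NN.emeasure_eq_measure[of "{x..}"] by (simp add: ennreal_le_iff)
  then show ?thesis by (simp add: Phi_Ici)
qed

lemma exp_neg_upper: "0 \<le> (u::real) \<Longrightarrow> exp (- u) \<le> 1 - u + u\<^sup>2 / 2"
proof -
  assume u: "0 \<le> u"
  let ?g = "\<lambda>u::real. 1 - u + u\<^sup>2 / 2 - exp (- u)"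
  have "?g 0 \<le> ?g u"
  proof (rule DERIV_nonneg_imp_nondecreasing[OF u])
    fix t :: real assume t: "0 \<le> t" "t \<le> u"
    show "\<exists>y. (?g has_real_derivative y) (at t) \<and> 0 \<le> y"
    proof (intro exI conjI)
      show "(?g has_real_derivative (-1 + t + exp (- t))) (at t)"
        by (auto intro!: derivative_eq_intros simp: power2_eq_square)
      show "0 \<le> -1 + t + exp (- t)" using exp_ge_add_one_self[of "- t"] by simp
    qed
  qed
  then show ?thesis by simp
qed

lemma center_bound:
  "Phi (3/4) - Phi 0 \<le> (3/4 - (3/4)^3/6 + (3/4)^5/40) / sqrt (2 * pi)"
proof -
  let ?P = "\<lambda>s::real. (s - s ^ 3 / 6 + s ^ 5 / 40) / sqrt (2 * pi)"
  let ?p = "\<lambda>s::real. (1 - s\<^sup>2 / 2 + s ^ 4 / 8) / sqrt (2 * pi)"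
  have "emeasure NN {0..3/4} = (\<integral>\<^sup>+s. ennreal (phi s) * indicator {0..3/4} s \<partial>lborel)"
    by (rule emeasure_NN) simp
  also have "\<dots> \<le> (\<integral>\<^sup>+s. ennreal (?p s) * indicator {0..3/4} s \<partial>lborel)"
  proof (intro nn_integral_mono)
    fix s :: real
    have "exp (- (s\<^sup>2 / 2)) \<le> 1 - s\<^sup>2 / 2 + (s\<^sup>2 / 2)\<^sup>2 / 2" by (rule exp_neg_upper) simp
    also have "\<dots> = 1 - s\<^sup>2 / 2 + s ^ 4 / 8" by (simp add: power2_eq_square power4_eq_xxxx)
    finally have "phi s \<le> ?p s" by (simp add: phi_eq divide_right_mono)
    then show "ennreal (phi s) * indicator {0..3/4} s \<le> ennreal (?p s) * indicator {0..3/4} s"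
      by (auto simp: ennreal_leI split: split_indicator)
  qed
  also have "\<dots> = ennreal (?P (3/4) - ?P 0)"
  proof (rule nn_integral_FTC_Icc)
    fix s :: real assume "s \<in> {0..3/4}"
    show "(?P has_real_derivative ?p s) (at s)"
      by (auto intro!: derivative_eq_intros simp: field_simps eval_nat_numeral)
    have "s\<^sup>2 \<le> 1" using \<open>s \<in> {0..3/4}\<close> by (auto intro!: power_le_one)
    then show "0 \<le> ?p s" by (simp add: add_nonneg_nonneg)
  qed simp_all
  finally have le: "emeasure NN {0..3/4} \<le> ennreal (?P (3/4) - ?P 0)" .
  have pos: "0 \<le> ?P (3/4) - ?P 0" by (simp, intro divide_nonneg_nonneg, simp_all add: power_divide)
  have "measure NN {0..3/4} \<le> ?P (3/4) - ?P 0"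
    using enn2real_leI[OF pos le] by (simp add: measure_def)
  then show ?thesis using Phi_Icc[of 0 "3/4"] by simp
qed


lemma nn_NN:
  assumes "f \<in> borel_measurable borel"
  shows "(\<integral>\<^sup>+x. f x \<partial>NN) = (\<integral>\<^sup>+x. ennreal (std_normal_density x) * f x \<partial>lborel)"
  using assms by (subst nn_integral_density) auto

lemma discNN:
  fixes r :: real assumes r: "0 \<le> r"
  shows "(\<integral>\<^sup>+b. \<integral>\<^sup>+c. indicator {..r\<^sup>2} (b\<^sup>2 + c\<^sup>2) \<partial>NN \<partial>NN) = ennreal (1 - exp (- r\<^sup>2 / 2))"
proof -
  have "(\<integral>\<^sup>+b. \<integral>\<^sup>+c. indicator {..r\<^sup>2} (b\<^sup>2 + c\<^sup>2) \<partial>NN \<partial>NN)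
      = (\<integral>\<^sup>+b. ennreal (std_normal_density b) * (\<integral>\<^sup>+c. indicator {..r\<^sup>2} (b\<^sup>2 + c\<^sup>2) \<partial>NN) \<partial>lborel)"
    by (rule nn_NN) measurable
  also have "\<dots> = (\<integral>\<^sup>+b. ennreal (std_normal_density b) * (\<integral>\<^sup>+c. ennreal (std_normal_density c) * indicator {..r\<^sup>2} (b\<^sup>2 + c\<^sup>2) \<partial>lborel) \<partial>lborel)"
    by (intro nn_integral_cong arg_cong2[where f="(*)"] refl nn_NN) measurable
  also have "\<dots> = (\<integral>\<^sup>+b. (\<integral>\<^sup>+c. ennreal (std_normal_density b * std_normal_density c) * indicator {..r\<^sup>2} (b\<^sup>2 + c\<^sup>2) \<partial>lborel) \<partial>lborel)"
    by (intro nn_integral_cong, subst nn_integral_cmult[symmetric]) (measurable, auto intro!: nn_integral_cong simp: ennreal_mult mult.assoc)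
  also have "\<dots> = ennreal (1 - exp (- r\<^sup>2 / 2))" by (rule disc[OF r])
  finally show ?thesis .
qed

lemma gm3_set:
  assumes S: "S \<in> sets (borel \<Otimes>\<^sub>M borel \<Otimes>\<^sub>M (borel :: real measure))"
  shows "emeasure (gauss_meas 3) {x \<in> space (gauss_meas 3). (x 0, x 1, x 2) \<in> S}
       = (\<integral>\<^sup>+a. (\<integral>\<^sup>+b. (\<integral>\<^sup>+c. indicator S (a, b, c) \<partial>NN) \<partial>NN) \<partial>NN)"
proof -
  have mS: "(\<lambda>p. indicator S (fst p, fst (snd p), snd (snd p)) :: ennreal) \<in> borel_measurable (borel \<Otimes>\<^sub>M borel \<Otimes>\<^sub>M borel)"
    using S by simp
  have mm: "(\<lambda>x. (x 0, x 1, x 2)) \<in> gauss_meas 3 \<rightarrow>\<^sub>M (borel \<Otimes>\<^sub>M borel \<Otimes>\<^sub>M borel)"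
    unfolding gauss_meas_eq by (intro measurable_Pair comp_meas) auto
  have set: "{x \<in> space (gauss_meas 3). (x 0, x 1, x 2) \<in> S} \<in> sets (gauss_meas 3)"
    using measurable_sets[OF mm S] by (simp add: vimage_def Int_def conj_commute)
  have "emeasure (gauss_meas 3) {x \<in> space (gauss_meas 3). (x 0, x 1, x 2) \<in> S}
      = (\<integral>\<^sup>+x. indicator {x \<in> space (gauss_meas 3). (x 0, x 1, x 2) \<in> S} x \<partial>gauss_meas 3)"
    by (rule nn_integral_indicator[symmetric, OF set])
  also have "\<dots> = (\<integral>\<^sup>+x. indicator S (x 0, x 1, x 2) \<partial>gauss_meas 3)"
    by (intro nn_integral_cong) (auto split: split_indicator)
  also have "\<dots> = (\<integral>\<^sup>+a. (\<integral>\<^sup>+b. (\<integral>\<^sup>+c. indicator S (a, b, c) \<partial>NN) \<partial>NN) \<partial>NN)"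
    by (rule gm3_Pi[where F="\<lambda>a b c. indicator S (a, b, c)", OF mS])
  finally show ?thesis .
qed


lemma gm2_set:
  assumes S: "S \<in> sets (borel \<Otimes>\<^sub>M (borel :: real measure))"
  shows "emeasure (gauss_meas 2) {x \<in> space (gauss_meas 2). (x 0, x 1) \<in> S}
       = (\<integral>\<^sup>+a. (\<integral>\<^sup>+b. indicator S (a, b) \<partial>NN) \<partial>NN)"
proof -
  have mm: "(\<lambda>x. (x 0, x 1)) \<in> gauss_meas 2 \<rightarrow>\<^sub>M (borel \<Otimes>\<^sub>M borel)"
    unfolding gauss_meas_eq by (intro measurable_Pair comp_meas) auto
  have set: "{x \<in> space (gauss_meas 2). (x 0, x 1) \<in> S} \<in> sets (gauss_meas 2)"
    using measurable_sets[OF mm S] by (simp add: vimage_def Int_def conj_commute)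
  have mS: "(\<lambda>p. indicator S p :: ennreal) \<in> borel_measurable (borel \<Otimes>\<^sub>M borel)"
    using S by simp
  have mI: "(\<lambda>x. indicator S (x 0, x 1) :: ennreal) \<in> borel_measurable (PiM (insert (0::nat) {1}) (\<lambda>_. NN))"
  proof -
    have "(\<lambda>x. (x 0, x 1)) \<in> PiM (insert (0::nat) {1}) (\<lambda>_. NN) \<rightarrow>\<^sub>M (borel \<Otimes>\<^sub>M borel)"
      by (intro measurable_Pair comp_meas) auto
    from measurable_comp[OF this mS] show ?thesis by (simp add: comp_def)
  qed
  have mb: "(\<lambda>b. indicator S (a, b) :: ennreal) \<in> borel_measurable NN" for a
  proof -
    have "(\<lambda>b::real. (a, b)) \<in> NN \<rightarrow>\<^sub>M (borel \<Otimes>\<^sub>M borel)" by measurable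
    from measurable_comp[OF this mS] show ?thesis by (simp add: comp_def)
  qed
  have e: "{..<2::nat} = insert 0 {1}" by auto
  have "emeasure (gauss_meas 2) {x \<in> space (gauss_meas 2). (x 0, x 1) \<in> S}
      = (\<integral>\<^sup>+x. indicator {x \<in> space (gauss_meas 2). (x 0, x 1) \<in> S} x \<partial>gauss_meas 2)"
    by (rule nn_integral_indicator[symmetric, OF set])
  also have "\<dots> = (\<integral>\<^sup>+x. indicator S (x 0, x 1) \<partial>gauss_meas 2)"
    by (intro nn_integral_cong) (auto split: split_indicator)
  also have "\<dots> = (\<integral>\<^sup>+x. indicator S (x 0, x 1) \<partial>PiM (insert (0::nat) {1}) (\<lambda>_. NN))"
    unfolding gauss_meas_eq e ..
  also have "\<dots> = (\<integral>\<^sup>+a. (\<integral>\<^sup>+x. indicator S ((x(0:=a)) 0, (x(0:=a)) 1) \<partial>PiM {1::nat} (\<lambda>_. NN)) \<partial>NN)"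
    by (rule NNP.product_nn_integral_insert_rev) (simp, simp, rule mI)
  also have "\<dots> = (\<integral>\<^sup>+a. (\<integral>\<^sup>+x. indicator S (a, x 1) \<partial>PiM {1::nat} (\<lambda>_. NN)) \<partial>NN)"
    by (simp del: nn_integral_const)
  also have "\<dots> = (\<integral>\<^sup>+a. (\<integral>\<^sup>+b. indicator S (a, b) \<partial>NN) \<partial>NN)"
    by (intro nn_integral_cong NNP.product_nn_integral_singleton mb)
  finally show ?thesis .
qed

definition SK :: "real \<Rightarrow> real \<Rightarrow> real \<Rightarrow> (real \<times> real \<times> real) set" where
  "SK A B L = {p. \<bar>fst p\<bar> \<le> L \<and> (fst (snd p))\<^sup>2 + (snd (snd p))\<^sup>2 \<le> (A - B * \<bar>fst p\<bar>)\<^sup>2}"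

lemma SK_sets: "SK A B L \<in> sets (borel \<Otimes>\<^sub>M borel \<Otimes>\<^sub>M (borel :: real measure))"
proof -
  have "Measurable.pred (borel \<Otimes>\<^sub>M borel \<Otimes>\<^sub>M (borel :: real measure)) (\<lambda>p. \<bar>fst p\<bar> \<le> L \<and> (fst (snd p))\<^sup>2 + (snd (snd p))\<^sup>2 \<le> (A - B * \<bar>fst p\<bar>)\<^sup>2)"
    by measurable
  then show ?thesis by (simp add: SK_def pred_def space_pair_measure)
qed

lemma gamma_SK:
  assumes B: "0 \<le> B" and AL: "B * L \<le> A"
  shows "emeasure (gauss_meas 3) {x \<in> space (gauss_meas 3). (x 0, x 1, x 2) \<in> SK A B L}
     = (\<integral>\<^sup>+a. indicator {-L..L} a * ennreal (1 - exp (- (A - B * \<bar>a\<bar>)\<^sup>2 / 2)) \<partial>NN)"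
proof -
  have "emeasure (gauss_meas 3) {x \<in> space (gauss_meas 3). (x 0, x 1, x 2) \<in> SK A B L}
     = (\<integral>\<^sup>+a. (\<integral>\<^sup>+b. (\<integral>\<^sup>+c. indicator (SK A B L) (a, b, c) \<partial>NN) \<partial>NN) \<partial>NN)"
    by (rule gm3_set[OF SK_sets])
  also have "\<dots> = (\<integral>\<^sup>+a. indicator {-L..L} a * ennreal (1 - exp (- (A - B * \<bar>a\<bar>)\<^sup>2 / 2)) \<partial>NN)"
  proof (intro nn_integral_cong)
    fix a :: real
    show "(\<integral>\<^sup>+b. (\<integral>\<^sup>+c. indicator (SK A B L) (a, b, c) \<partial>NN) \<partial>NN)
        = indicator {-L..L} a * ennreal (1 - exp (- (A - B * \<bar>a\<bar>)\<^sup>2 / 2))"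
    proof (cases "\<bar>a\<bar> \<le> L")
      case True
      have r: "0 \<le> A - B * \<bar>a\<bar>" using True B AL mult_left_mono[OF True B] by linarith
      have "(\<integral>\<^sup>+b. (\<integral>\<^sup>+c. indicator (SK A B L) (a, b, c) \<partial>NN) \<partial>NN)
          = (\<integral>\<^sup>+b. (\<integral>\<^sup>+c. indicator {..(A - B * \<bar>a\<bar>)\<^sup>2} (b\<^sup>2 + c\<^sup>2) \<partial>NN) \<partial>NN)"
        using True by (intro nn_integral_cong) (auto simp: SK_def split: split_indicator)
      also have "\<dots> = ennreal (1 - exp (- (A - B * \<bar>a\<bar>)\<^sup>2 / 2))" by (rule discNN[OF r])
      finally show ?thesis using True by (simp add: abs_le_iff)
    next
      case False
      then show ?thesis by (auto simp: SK_def indicator_def abs_le_iff)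
    qed
  qed
  finally show ?thesis .
qed

definition SC :: "real \<Rightarrow> (real \<times> real \<times> real) set" where
  "SC w = {p. (fst p)\<^sup>2 + (fst (snd p))\<^sup>2 \<le> w\<^sup>2}"

lemma gamma_SC:
  assumes w: "0 \<le> w"
  shows "emeasure (gauss_meas 3) {x \<in> space (gauss_meas 3). (x 0, x 1, x 2) \<in> SC w} = ennreal (1 - exp (- w\<^sup>2 / 2))"
proof -
  have "Measurable.pred (borel \<Otimes>\<^sub>M borel \<Otimes>\<^sub>M (borel :: real measure)) (\<lambda>p. (fst p)\<^sup>2 + (fst (snd p))\<^sup>2 \<le> w\<^sup>2)"
    by measurable
  then have "SC w \<in> sets (borel \<Otimes>\<^sub>M borel \<Otimes>\<^sub>M (borel :: real measure))" by (simp add: SC_def pred_def space_pair_measure)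
  then have "emeasure (gauss_meas 3) {x \<in> space (gauss_meas 3). (x 0, x 1, x 2) \<in> SC w}
     = (\<integral>\<^sup>+a. (\<integral>\<^sup>+b. (\<integral>\<^sup>+c. indicator (SC w) (a, b, c) \<partial>NN) \<partial>NN) \<partial>NN)"
    by (rule gm3_set)
  also have "\<dots> = (\<integral>\<^sup>+a. (\<integral>\<^sup>+b. indicator {..w\<^sup>2} (a\<^sup>2 + b\<^sup>2) \<partial>NN) \<partial>NN)"
  proof (intro nn_integral_cong)
    fix a b :: real
    have "(\<integral>\<^sup>+c. indicator (SC w) (a, b, c) \<partial>NN) = (\<integral>\<^sup>+c. indicator {..w\<^sup>2} (a\<^sup>2 + b\<^sup>2) \<partial>NN)"
      by (intro nn_integral_cong) (auto simp: SC_def split: split_indicator)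
    also have "\<dots> = indicator {..w\<^sup>2} (a\<^sup>2 + b\<^sup>2)"
      using NN.emeasure_space_1 by simp
    finally show "(\<integral>\<^sup>+c. indicator (SC w) (a, b, c) \<partial>NN) = indicator {..w\<^sup>2} (a\<^sup>2 + b\<^sup>2)" .
  qed
  also have "\<dots> = ennreal (1 - exp (- w\<^sup>2 / 2))" by (rule discNN[OF w])
  finally show ?thesis .
qed

lemma gamma_S2:
  assumes w: "0 \<le> w"
  shows "emeasure (gauss_meas 2) {x \<in> space (gauss_meas 2). (x 0, x 1) \<in> {p. (fst p)\<^sup>2 + (snd p)\<^sup>2 \<le> w\<^sup>2}} = ennreal (1 - exp (- w\<^sup>2 / 2))"
proof -
  have "Measurable.pred (borel \<Otimes>\<^sub>M (borel :: real measure)) (\<lambda>p. (fst p)\<^sup>2 + (snd p)\<^sup>2 \<le> w\<^sup>2)"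
    by measurable
  then have "{p. (fst p)\<^sup>2 + (snd p)\<^sup>2 \<le> w\<^sup>2} \<in> sets (borel \<Otimes>\<^sub>M (borel :: real measure))" by (simp add: pred_def space_pair_measure)
  then have "emeasure (gauss_meas 2) {x \<in> space (gauss_meas 2). (x 0, x 1) \<in> {p. (fst p)\<^sup>2 + (snd p)\<^sup>2 \<le> w\<^sup>2}}
     = (\<integral>\<^sup>+a. (\<integral>\<^sup>+b. indicator {p. (fst p)\<^sup>2 + (snd p)\<^sup>2 \<le> w\<^sup>2} (a, b) \<partial>NN) \<partial>NN)"
    by (rule gm2_set)
  also have "\<dots> = (\<integral>\<^sup>+a. (\<integral>\<^sup>+b. indicator {..w\<^sup>2} (a\<^sup>2 + b\<^sup>2) \<partial>NN) \<partial>NN)"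
    by (intro nn_integral_cong) (auto split: split_indicator)
  also have "\<dots> = ennreal (1 - exp (- w\<^sup>2 / 2))" by (rule discNN[OF w])
  finally show ?thesis .
qed


lemma sq_identity:
  "phi a * exp (- (A - 15/8 * a)\<^sup>2 / 2) = exp (- (8 * A / 17)\<^sup>2 / 2) * phi (- (15 * A / 17) + 17/8 * a)"
proof -
  have "a\<^sup>2 + (A - 15/8 * a)\<^sup>2 = (8 * A / 17)\<^sup>2 + (- (15 * A / 17) + 17/8 * a)\<^sup>2"
    by (simp add: power2_eq_square field_simps)
  then have "- a\<^sup>2 / 2 + - (A - 15/8 * a)\<^sup>2 / 2 = - (8 * A / 17)\<^sup>2 / 2 + - (- (15 * A / 17) + 17/8 * a)\<^sup>2 / 2"
    by (simp add: field_simps)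
  then have "exp (- a\<^sup>2 / 2) * exp (- (A - 15/8 * a)\<^sup>2 / 2) = exp (- (8 * A / 17)\<^sup>2 / 2) * exp (- (- (15 * A / 17) + 17/8 * a)\<^sup>2 / 2)"
    by (simp add: mult_exp_exp)
  then show ?thesis by (simp add: phi_eq)
qed

lemma R_formula:
  assumes L: "0 \<le> L"
  shows "(\<integral>\<^sup>+a. indicator {-L..L} a * ennreal (exp (- (A - 15/8 * \<bar>a\<bar>)\<^sup>2 / 2)) \<partial>NN)
     = ennreal (16/17 * exp (- (8 * A / 17)\<^sup>2 / 2) * (Phi (- (15 * A / 17) + 17/8 * L) - Phi (- (15 * A / 17))))"
proof -
  define t where "t = - (15 * A / 17)"
  define E where "E = exp (- (8 * A / 17)\<^sup>2 / 2)"
  let ?h = "\<lambda>a. ennreal (phi a) * (indicator {-L..L} a * ennreal (exp (- (A - 15/8 * \<bar>a\<bar>)\<^sup>2 / 2)))"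
  have "(\<integral>\<^sup>+a. indicator {-L..L} a * ennreal (exp (- (A - 15/8 * \<bar>a\<bar>)\<^sup>2 / 2)) \<partial>NN) = (\<integral>\<^sup>+a. ?h a \<partial>lborel)"
    by (rule nn_NN) measurable
  also have "\<dots> = 2 * (\<integral>\<^sup>+a. ?h a * indicator {0<..} a \<partial>lborel)"
    by (rule nn_even) (measurable, auto simp: phi_even indicator_def)
  also have "(\<integral>\<^sup>+a. ?h a * indicator {0<..} a \<partial>lborel) = (\<integral>\<^sup>+a. ennreal E * (ennreal (phi (t + 17/8 * a)) * indicator {0..L} a) \<partial>lborel)"
    apply (intro nn_integral_cong_AE)
    using AE_lborel_singleton[of 0]
    apply (rule eventually_mono)
    using sq_identity by (auto simp: t_def E_def ennreal_mult[symmetric] split: split_indicator)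
  also have "\<dots> = ennreal E * (\<integral>\<^sup>+a. ennreal (phi (t + 17/8 * a)) * indicator {0..L} a \<partial>lborel)"
    by (rule nn_integral_cmult) measurable
  also have "(\<integral>\<^sup>+a. ennreal (phi (t + 17/8 * a)) * indicator {0..L} a \<partial>lborel) = ennreal (8/17) * emeasure NN {t..t + 17/8 * L}"
  proof -
    have "emeasure NN {t..t + 17/8 * L} = (\<integral>\<^sup>+y. ennreal (phi y) * indicator {t..t + 17/8 * L} y \<partial>lborel)"
      by (rule emeasure_NN) simp
    also have "\<dots> = ennreal \<bar>17/8\<bar> * (\<integral>\<^sup>+a. ennreal (phi (t + 17/8 * a)) * indicator {t..t + 17/8 * L} (t + 17/8 * a) \<partial>lborel)"
      by (rule nn_integral_real_affine) auto
    also have "\<dots> = ennreal (17/8) * (\<integral>\<^sup>+a. ennreal (phi (t + 17/8 * a)) * indicator {0..L} a \<partial>lborel)"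
      by (auto intro!: nn_integral_cong arg_cong2[where f="(*)"] split: split_indicator)
    finally have "emeasure NN {t..t + 17/8 * L} = ennreal (17/8) * (\<integral>\<^sup>+a. ennreal (phi (t + 17/8 * a)) * indicator {0..L} a \<partial>lborel)" .
    then have "ennreal (8/17) * emeasure NN {t..t + 17/8 * L} = (ennreal (8/17) * ennreal (17/8)) * (\<integral>\<^sup>+a. ennreal (phi (t + 17/8 * a)) * indicator {0..L} a \<partial>lborel)"
      by (simp add: mult.assoc)
    also have "ennreal (8/17) * ennreal (17/8) = 1" by (simp flip: ennreal_mult)
    finally show ?thesis by simp
  qed
  also have "emeasure NN {t..t + 17/8 * L} = ennreal (Phi (t + 17/8 * L) - Phi t)"
    using Phi_Icc[of t "t + 17/8 * L"] L NN.emeasure_eq_measure by simp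
  finally have "(\<integral>\<^sup>+a. indicator {-L..L} a * ennreal (exp (- (A - 15/8 * \<bar>a\<bar>)\<^sup>2 / 2)) \<partial>NN)
     = 2 * (ennreal E * (ennreal (8/17) * ennreal (Phi (t + 17/8 * L) - Phi t)))" .
  also have "\<dots> = ennreal (16/17 * E * (Phi (t + 17/8 * L) - Phi t))"
  proof -
    have "Phi t \<le> Phi (t + 17/8 * L)" unfolding Phi_def using L by (intro NN.finite_measure_mono) auto
    then show ?thesis
      by (simp add: E_def ennreal_mult[symmetric] del: ennreal_numeral flip: ennreal_numeral)
  qed
  finally show ?thesis by (simp add: t_def E_def)
qed


lemma gammaK_meas:
  assumes L: "0 \<le> L" and AL: "15/8 * L \<le> A"
  shows "measure (gauss_meas 3) {x \<in> space (gauss_meas 3). (x 0, x 1, x 2) \<in> SK A (15/8) L}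
     = (Phi L - Phi (-L)) - 16/17 * exp (- (8 * A / 17)\<^sup>2 / 2) * (Phi (- (15 * A / 17) + 17/8 * L) - Phi (- (15 * A / 17)))"
proof -
  define R where "R = 16/17 * exp (- (8 * A / 17)\<^sup>2 / 2) * (Phi (- (15 * A / 17) + 17/8 * L) - Phi (- (15 * A / 17)))"
  define X where "X = (\<integral>\<^sup>+a. indicator {-L..L} a * ennreal (1 - exp (- (A - 15/8 * \<bar>a\<bar>)\<^sup>2 / 2)) \<partial>NN)"
  have R0: "0 \<le> R"
  proof -
    have "Phi (- (15 * A / 17)) \<le> Phi (- (15 * A / 17) + 17/8 * L)" unfolding Phi_def using L by (intro NN.finite_measure_mono) auto
    then show ?thesis by (simp add: R_def)
  qed
  have eq: "emeasure (gauss_meas 3) {x \<in> space (gauss_meas 3). (x 0, x 1, x 2) \<in> SK A (15/8) L} = X"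
    unfolding X_def by (rule gamma_SK) (use AL in auto)
  have "X + ennreal R = (\<integral>\<^sup>+a. indicator {-L..L} a * ennreal (1 - exp (- (A - 15/8 * \<bar>a\<bar>)\<^sup>2 / 2))
        + indicator {-L..L} a * ennreal (exp (- (A - 15/8 * \<bar>a\<bar>)\<^sup>2 / 2)) \<partial>NN)"
    unfolding X_def R_def R_formula[OF L, symmetric] by (rule nn_integral_add[symmetric]) measurable
  also have "\<dots> = (\<integral>\<^sup>+a. indicator {-L..L} a \<partial>NN)"
  proof (intro nn_integral_cong)
    fix a :: real
    have "exp (- (A - 15/8 * \<bar>a\<bar>)\<^sup>2 / 2) \<le> 1" by simp
    then have "ennreal (1 - exp (- (A - 15/8 * \<bar>a\<bar>)\<^sup>2 / 2)) + ennreal (exp (- (A - 15/8 * \<bar>a\<bar>)\<^sup>2 / 2)) = 1"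
      by (subst ennreal_plus[symmetric]) auto
    then show "indicator {-L..L} a * ennreal (1 - exp (- (A - 15/8 * \<bar>a\<bar>)\<^sup>2 / 2))
        + indicator {-L..L} a * ennreal (exp (- (A - 15/8 * \<bar>a\<bar>)\<^sup>2 / 2)) = indicator {-L..L} a"
      by (simp add: distrib_left[symmetric])
  qed
  also have "\<dots> = emeasure NN {-L..L}" by simp
  also have "\<dots> = ennreal (Phi L - Phi (-L))" using Phi_Icc[of "-L" L] L NN.emeasure_eq_measure by simp
  finally have XR: "X + ennreal R = ennreal (Phi L - Phi (-L))" .
  then have Xfin: "X \<noteq> \<top>" by auto
  then obtain x where x: "X = ennreal x" "0 \<le> x" by (cases X) auto
  have "ennreal (x + R) = ennreal (Phi L - Phi (-L))" using XR x R0 by (simp add: ennreal_plus)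
  moreover have "Phi (-L) \<le> Phi L" unfolding Phi_def using L by (intro NN.finite_measure_mono) auto
  ultimately have "x + R = Phi L - Phi (-L)"
    using x R0 by (subst (asm) ennreal_inj) auto
  then have xx: "x = Phi L - Phi (-L) - R" by linarith
  have "measure (gauss_meas 3) {x \<in> space (gauss_meas 3). (x 0, x 1, x 2) \<in> SK A (15/8) L} = x"
    unfolding measure_def eq x(1) using x(2) by simp
  then show ?thesis using xx unfolding R_def by simp
qed


definition gK :: "real \<Rightarrow> real \<Rightarrow> real" where
  "gK A L = (Phi L - Phi (-L)) - 16/17 * exp (- (8 * A / 17)\<^sup>2 / 2) * (Phi (- (15 * A / 17) + 17/8 * L) - Phi (- (15 * A / 17)))"

lemma sqrt2pi_bounds: "5/2 \<le> sqrt (2 * pi)" "sqrt (2 * pi) \<le> 25067/10000"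
proof -
  have "(5/2)\<^sup>2 \<le> 2 * pi" using pi_approx(1) by (simp add: power2_eq_square)
  then show "5/2 \<le> sqrt (2 * pi)" by (rule real_le_rsqrt)
  have "2 * pi \<le> (25067/10000)\<^sup>2" using pi_approx(2) by (simp add: power2_eq_square)
  then show "sqrt (2 * pi) \<le> 25067/10000" by (rule real_sqrt_le_iff[THEN iffD2, THEN order_trans]) (simp add: real_sqrt_abs)
qed

lemma exp_neg2: "exp (-2::real) \<le> 1372/10000"
proof -
  have e1: "27/10 \<le> exp (1::real)" using e_approx_32 by (simp add: abs_if split: if_splits)
  have "exp (2::real) = exp 1 * exp 1" by (simp flip: exp_add)
  also have "\<dots> \<ge> 27/10 * (27/10)" using e1 by (intro mult_mono) auto
  finally have "729/100 \<le> exp (2::real)" by simp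
  then have "1 / exp 2 \<le> 1 / (729/100::real)" by (intro divide_left_mono) auto
  then show ?thesis by (simp add: exp_minus field_simps)
qed

lemma Phi_mono: "x \<le> y \<Longrightarrow> Phi x \<le> Phi y"
  unfolding Phi_def by (intro NN.finite_measure_mono) auto

lemma Phi_nonneg: "0 \<le> Phi x" unfolding Phi_def by simp
lemma Phi_le1: "Phi x \<le> 1" unfolding Phi_def by simp

lemma N1: "gK 17 8 \<le> 1 - exp (-32)"
proof -
  define s where "s = sqrt (2 * pi)"
  define E where "E = exp (-2::real)"
  have s: "5/2 \<le> s" "s \<le> 25067/10000" using sqrt2pi_bounds by (auto simp: s_def)
  have E: "E \<le> 1372/10000" "0 < E" using exp_neg2 by (auto simp: E_def)
  have phi8: "phi 8 = exp (-32) / s" by (simp add: phi_eq s_def)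
  have phi2: "phi 2 = E / s" by (simp add: phi_eq s_def E_def)
  have "phi 15 \<le> E / s"
  proof -
    have "exp (- (15::real)\<^sup>2 / 2) \<le> E" unfolding E_def by simp
    then show ?thesis using s by (simp add: phi_eq s_def divide_right_mono)
  qed
  have t8: "phi 8 * (1 / 8 - 1 / 8 ^ 3) \<le> 1 - Phi 8" by (rule tail_lower) simp
  have t2: "1 - Phi 2 \<le> phi 2 / 2" by (rule tail_upper) simp
  have t15: "1 - Phi 15 \<le> phi 15 / 15" by (rule tail_upper) simp
  have neg: "Phi (-8) = 1 - Phi 8" "Phi (-15) = 1 - Phi 15" by (simp_all add: Phi_neg[of 8, simplified] Phi_neg[of 15, simplified])
  have g: "gK 17 8 = (Phi 8 - Phi (-8)) - 16/17 * exp (-32) * (Phi 2 - Phi (-15))"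
    by (simp add: gK_def)
  let ?e = "exp (-32::real)"
  have e0: "0 < ?e" by simp
  have "gK 17 8 \<le> 1 - 2 * (?e / s) * (63/512) - 16/17 * ?e * (1 - (E / s) / 2 - (E / s) / 15)"
  proof -
    have a: "Phi 8 - Phi (-8) \<le> 1 - 2 * (?e / s) * (63/512)" using t8 neg phi8 by simp
    have b: "1 - (E / s) / 2 - (E / s) / 15 \<le> Phi 2 - Phi (-15)"
      using t2 t15 neg phi2 \<open>phi 15 \<le> E / s\<close> by (simp add: divide_right_mono)
    have "16/17 * ?e * (1 - (E / s) / 2 - (E / s) / 15) \<le> 16/17 * ?e * (Phi 2 - Phi (-15))"
      using b e0 by (intro mult_left_mono) auto
    then show ?thesis using a g by linarith
  qed
  also have "\<dots> \<le> 1 - ?e"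
  proof -
    have "s / 17 \<le> 63/256 - (16/30) * E" using s E by simp
    then have "?e * (s / 17) \<le> ?e * (63/256 - (16/30) * E)" using e0 by (intro mult_left_mono) auto
    then have "?e * s \<le> 2 * ?e * (63/512) + 16/17 * ?e * (s - E / 2 - E / 15)" by (simp add: field_simps)
    then have "?e * s / s \<le> (2 * ?e * (63/512) + 16/17 * ?e * (s - E / 2 - E / 15)) / s"
      using s by (intro divide_right_mono) auto
    moreover have "?e * s / s = ?e" using s by simp
    moreover have "(2 * ?e * (63/512) + 16/17 * ?e * (s - E / 2 - E / 15)) / s
        = 2 * (?e / s) * (63/512) + 16/17 * ?e * (1 - (E / s) / 2 - (E / s) / 15)"
      using s by (simp add: field_simps)
    ultimately show ?thesis by linarith
  qed
  finally show ?thesis .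
qed


lemma N2: "1 - exp (-(9/2)) < gK (51/8) 3"
proof -
  define s where "s = sqrt (2 * pi)"
  define P :: real where "P = 3/4 - (3/4)^3/6 + (3/4)^5/40"
  let ?e = "exp (-(9/2)::real)"
  have s: "5/2 \<le> s" using sqrt2pi_bounds by (auto simp: s_def)
  have e0: "0 < ?e" by simp
  have g: "gK (51/8) 3 = (Phi 3 - Phi (-3)) - 16/17 * ?e * (Phi (3/4) - Phi (-(45/8)))"
    by (simp add: gK_def power2_eq_square)
  have phi3: "phi 3 = ?e / s" by (simp add: phi_eq s_def)
  have t3: "1 - Phi 3 \<le> phi 3 / 3" by (rule tail_upper) simp
  have c: "Phi (3/4) - Phi 0 \<le> P / s" using center_bound by (simp add: P_def s_def)
  have a: "1 - 2 * (?e / s) / 3 \<le> Phi 3 - Phi (-3)" using t3 phi3 Phi_neg[of 3] by simp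
  have b: "Phi (3/4) - Phi (-(45/8)) \<le> 1/2 + P / s" using c Phi_0 Phi_nonneg[of "-(45/8)"] by simp
  have "16/17 * ?e * (Phi (3/4) - Phi (-(45/8))) \<le> 16/17 * ?e * (1/2 + P / s)"
    using b e0 by (intro mult_left_mono) auto
  then have "1 - 2 * (?e / s) / 3 - 16/17 * ?e * (1/2 + P / s) \<le> gK (51/8) 3" using a g by linarith
  moreover have "1 - ?e < 1 - 2 * (?e / s) / 3 - 16/17 * ?e * (1/2 + P / s)"
  proof -
    have "2/3 + 16/17 * P < 9/17 * s" using s by (simp add: P_def power_divide)
    then have "?e * (2/3 + 16/17 * P) < ?e * (9/17 * s)" using e0 by (intro mult_strict_left_mono) auto
    then have A1: "?e * (2/3 + 16/17 * P) / s < ?e * (9/17 * s) / s" using s by (intro divide_strict_right_mono) auto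
    have A2: "?e * (9/17 * s) / s = 9/17 * ?e" using s by simp
    have A3: "?e * (2/3 + 16/17 * P) / s = 2 * (?e / s) / 3 + 16/17 * ?e * (P / s)" using s by (simp add: field_simps)
    have d: "16/17 * ?e * (1/2 + P / s) = 8/17 * ?e + 16/17 * ?e * (P / s)" by (simp add: algebra_simps)
    from A1 A2 A3 have "2 * (?e / s) / 3 + 16/17 * ?e * (P / s) < 9/17 * ?e" by linarith
    then show ?thesis using d by linarith
  qed
  ultimately show ?thesis by linarith
qed

lemma Nup: "1 - exp (-32) \<le> gK 25 8"
proof -
  define s where "s = sqrt (2 * pi)"
  let ?e = "exp (-32::real)"
  let ?f = "exp (- (8 * 25 / 17)\<^sup>2 / 2::real)"
  have s: "5/2 \<le> s" using sqrt2pi_bounds by (auto simp: s_def)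
  have e0: "0 < ?e" by simp
  have phi8: "phi 8 = ?e / s" by (simp add: phi_eq s_def)
  have t8: "1 - Phi 8 \<le> phi 8 / 8" by (rule tail_upper) simp
  have a: "1 - 2 * (?e / s) / 8 \<le> Phi 8 - Phi (-8)" using t8 phi8 Phi_neg[of 8] by simp
  have "Phi (- (15 * 25 / 17) + 17/8 * 8) - Phi (- (15 * 25 / 17)) \<le> 1"
    using Phi_le1[of "- (15 * 25 / 17) + 17/8 * 8"] Phi_nonneg[of "- (15 * 25 / 17)"] by linarith
  then have b: "16/17 * ?f * (Phi (- (15 * 25 / 17) + 17/8 * 8) - Phi (- (15 * 25 / 17))) \<le> 16/17 * ?f"
    by (intro mult_left_le) auto
  have f: "?f \<le> ?e / 2"
  proof -
    have "?f \<le> exp (-33)" by (simp add: power_divide)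
    also have "exp (-33::real) = ?e * exp (-1)" by (simp flip: exp_add)
    also have "exp (-1::real) \<le> 1/2"
    proof -
      have "2 \<le> exp (1::real)" using exp_ge_add_one_self[of 1] by simp
      then show ?thesis by (simp add: exp_minus field_simps)
    qed
    then have "?e * exp (-1) \<le> ?e * (1/2)" using e0 by (intro mult_left_mono) auto
    finally show ?thesis by simp
  qed
  have "2 * (?e / s) / 8 \<le> ?e / 10" using s e0 by (simp add: field_simps)
  moreover have g: "gK 25 8 = (Phi 8 - Phi (-8)) - 16/17 * ?f * (Phi (- (15 * 25 / 17) + 17/8 * 8) - Phi (- (15 * 25 / 17)))"
    unfolding gK_def ..
  ultimately show ?thesis using a b f e0 by linarith
qed

lemma gK_cont: "continuous_on {17..25} (\<lambda>A. gK A 8)"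
proof -
  have "isCont (\<lambda>A. gK A 8) A" for A
    unfolding gK_def
    by (intro continuous_intros isCont_o2[OF _ Phi_cont]) simp_all
  then show ?thesis by (intro continuous_at_imp_continuous_on) auto
qed

lemma exists_A: "\<exists>A. 17 \<le> A \<and> A \<le> 25 \<and> gK A 8 = 1 - exp (-32)"
  using IVT'[of "\<lambda>A. gK A 8" 17 "1 - exp (-32)" 25] N1 Nup gK_cont by auto


definition Kset :: "real \<Rightarrow> real \<Rightarrow> (nat \<Rightarrow> real) set" where
  "Kset A L = {x \<in> Rn 3. \<bar>x 0\<bar> \<le> L \<and> sqrt ((x 1)\<^sup>2 + (x 2)\<^sup>2) \<le> A - 15/8 * \<bar>x 0\<bar>}"

lemma enorm2: "enorm 2 x = sqrt ((x 0)\<^sup>2 + (x 1)\<^sup>2)"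
  by (simp add: enorm_def numeral_2_eq_2)

lemma enorm3: "enorm 3 x = sqrt ((x 0)\<^sup>2 + (x 1)\<^sup>2 + (x 2)\<^sup>2)"
  by (simp add: enorm_def numeral_3_eq_3 numeral_2_eq_2 add.commute add.left_commute)

lemma sqrt_le_iff_sq: "0 \<le> r \<Longrightarrow> 0 \<le> u \<Longrightarrow> sqrt u \<le> r \<longleftrightarrow> u \<le> r\<^sup>2"
  using real_sqrt_le_iff[of u "r\<^sup>2"] by simp

lemma ext_Rn: "(\<lambda>i. if i < n then x i else 0) \<in> Rn n"
  by (simp add: Rn_def)

lemma gm3_meas_set:
  assumes S: "S \<in> sets (borel \<Otimes>\<^sub>M borel \<Otimes>\<^sub>M (borel :: real measure))"
  shows "{x \<in> space (gauss_meas 3). (x 0, x 1, x 2) \<in> S} \<in> sets (gauss_meas 3)"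
proof -
  have mm: "(\<lambda>x. (x 0, x 1, x 2)) \<in> gauss_meas 3 \<rightarrow>\<^sub>M (borel \<Otimes>\<^sub>M borel \<Otimes>\<^sub>M borel)"
    unfolding gauss_meas_eq by (intro measurable_Pair comp_meas) auto
  show ?thesis using measurable_sets[OF mm S] by (simp add: vimage_def Int_def conj_commute)
qed

lemma Kset_eq:
  assumes "0 \<le> L" "15/8 * L \<le> A"
  shows "{x \<in> space (gauss_meas 3). (\<lambda>i. if i < 3 then x i else 0) \<in> Kset A L}
       = {x \<in> space (gauss_meas 3). (x 0, x 1, x 2) \<in> SK A (15/8) L}"
proof -
  have "(\<lambda>i. if i < 3 then x i else 0) \<in> Kset A L \<longleftrightarrow> (x 0, x 1, x 2) \<in> SK A (15/8) L" for x :: "nat \<Rightarrow> real"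
  proof (cases "\<bar>x 0\<bar> \<le> L")
    case True
    have r: "0 \<le> A - 15/8 * \<bar>x 0\<bar>" using True assms mult_left_mono[OF True, of "15/8"] by linarith
    show ?thesis using True sqrt_le_iff_sq[OF r, of "(x 1)\<^sup>2 + (x 2)\<^sup>2"]
      by (simp add: Kset_def SK_def ext_Rn)
  next
    case False
    then show ?thesis by (simp add: Kset_def SK_def ext_Rn)
  qed
  then show ?thesis by blast
qed

lemma gamma_Kset:
  assumes "0 \<le> L" "15/8 * L \<le> A"
  shows "gamma 3 (Kset A L) = gK A L"
  unfolding gamma_def Kset_eq[OF assms] gK_def by (rule gammaK_meas[OF assms])

lemma gamma_cyl:
  assumes w: "0 \<le> w"
  shows "gamma 3 (cyl 3 w) = 1 - exp (- w\<^sup>2 / 2)"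
proof -
  have "{x \<in> space (gauss_meas 3). (\<lambda>i. if i < 3 then x i else 0) \<in> cyl 3 w}
      = {x \<in> space (gauss_meas 3). (x 0, x 1, x 2) \<in> SC w}"
  proof -
    have "(\<lambda>i. if i < 3 then x i else 0) \<in> cyl 3 w \<longleftrightarrow> (x 0, x 1, x 2) \<in> SC w" for x :: "nat \<Rightarrow> real"
      using sqrt_le_iff_sq[OF w, of "(x 0)\<^sup>2 + (x 1)\<^sup>2"] by (simp add: cyl_def SC_def ext_Rn enorm2)
    then show ?thesis by blast
  qed
  then show ?thesis unfolding gamma_def measure_def using gamma_SC[OF w] by simp
qed

lemma gamma_B2:
  assumes w: "0 \<le> w"
  shows "gamma 2 (B2 2 w) = 1 - exp (- w\<^sup>2 / 2)"
proof -
  have "{x \<in> space (gauss_meas 2). (\<lambda>i. if i < 2 then x i else 0) \<in> B2 2 w}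
      = {x \<in> space (gauss_meas 2). (x 0, x 1) \<in> {p. (fst p)\<^sup>2 + (snd p)\<^sup>2 \<le> w\<^sup>2}}"
  proof -
    have "(\<lambda>i. if i < 2 then x i else 0) \<in> B2 2 w \<longleftrightarrow> (x 0, x 1) \<in> {p. (fst p)\<^sup>2 + (snd p)\<^sup>2 \<le> w\<^sup>2}" for x :: "nat \<Rightarrow> real"
      using sqrt_le_iff_sq[OF w, of "(x 0)\<^sup>2 + (x 1)\<^sup>2"] by (simp add: B2_def cball_n_def ext_Rn enorm2)
    then show ?thesis by blast
  qed
  then show ?thesis unfolding gamma_def measure_def using gamma_S2[OF w] by simp
qed


lemma dil_eq: "t \<noteq> 0 \<Longrightarrow> dil t S = {y. (\<lambda>i. y i / t) \<in> S}"
proof -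
  assume t: "t \<noteq> 0"
  show ?thesis
  proof (intro set_eqI iffI)
    fix y assume "y \<in> dil t S"
    then obtain x where "x \<in> S" "y = (\<lambda>i. t * x i)" by (auto simp: dil_def)
    then show "y \<in> {y. (\<lambda>i. y i / t) \<in> S}" using t by simp
  next
    fix y assume "y \<in> {y. (\<lambda>i. y i / t) \<in> S}"
    then have yS: "(\<lambda>i. y i / t) \<in> S" by simp
    show "y \<in> dil t S" unfolding dil_def
    proof (rule image_eqI[where x="\<lambda>i. y i / t"])
      show "y = (\<lambda>x i. t * x i) (\<lambda>i. y i / t)" using t by auto
    qed (rule yS)
  qed
qed

lemma sqrt_scale: "0 < t \<Longrightarrow> sqrt ((a / t)\<^sup>2 + (b / t)\<^sup>2) = sqrt (a\<^sup>2 + b\<^sup>2) / t"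
proof -
  assume t: "0 < t"
  have "(a / t)\<^sup>2 + (b / t)\<^sup>2 = (a\<^sup>2 + b\<^sup>2) / t\<^sup>2" by (simp add: power_divide add_divide_distrib)
  then show ?thesis using t by (simp add: real_sqrt_divide)
qed

lemma Rn_scale: "t \<noteq> 0 \<Longrightarrow> (\<lambda>i. y i / t) \<in> Rn n \<longleftrightarrow> y \<in> Rn n"
  by (simp add: Rn_def)

lemma dil_cyl: "0 < t \<Longrightarrow> dil t (cyl 3 w) = cyl 3 (t * w)"
proof -
  assume t: "0 < t"
  have "(\<lambda>i. y i / t) \<in> cyl 3 w \<longleftrightarrow> y \<in> cyl 3 (t * w)" for y :: "nat \<Rightarrow> real"
    using t by (simp add: cyl_def enorm2 sqrt_scale Rn_scale divide_le_eq mult.commute)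
  then show ?thesis using t by (simp add: dil_eq)
qed

lemma dil_Kset: "0 < t \<Longrightarrow> dil t (Kset A L) = Kset (t * A) (t * L)"
proof -
  assume t: "0 < t"
  have "(\<lambda>i. y i / t) \<in> Kset A L \<longleftrightarrow> y \<in> Kset (t * A) (t * L)" for y :: "nat \<Rightarrow> real"
  proof -
    have a: "\<bar>y 0\<bar> / t \<le> L \<longleftrightarrow> \<bar>y 0\<bar> \<le> t * L" using t by (simp add: divide_le_eq mult.commute)
    have b: "sqrt ((y 1)\<^sup>2 + (y 2)\<^sup>2) / t \<le> A - 15/8 * (\<bar>y 0\<bar> / t) \<longleftrightarrow> sqrt ((y 1)\<^sup>2 + (y 2)\<^sup>2) \<le> t * A - 15/8 * \<bar>y 0\<bar>"
    proof -
      have "A - 15/8 * (\<bar>y 0\<bar> / t) = (t * A - 15/8 * \<bar>y 0\<bar>) / t" using t by (simp add: field_simps)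
      then show ?thesis using t by (simp add: divide_le_cancel)
    qed
    have c: "sqrt ((y 1 / t)\<^sup>2 + (y 2 / t)\<^sup>2) = sqrt ((y 1)\<^sup>2 + (y 2)\<^sup>2) / t" by (rule sqrt_scale[OF t])
    have d: "\<bar>y 0 / t\<bar> = \<bar>y 0\<bar> / t" using t by simp
    have e: "(\<lambda>i. y i / t) \<in> Rn 3 \<longleftrightarrow> y \<in> Rn 3" using t by (simp add: Rn_scale)
    show ?thesis unfolding Kset_def mem_Collect_eq e c d a b ..
  qed
  then show ?thesis using t by (simp add: dil_eq)
qed

lemma gauss_prob: "prob_space (gauss_meas n)"
  unfolding gauss_meas_eq by (intro prob_space_PiM NN.prob_space_axioms)

lemma gamma_Kset_mono:
  assumes L: "0 \<le> L" and A: "15/8 * L \<le> A" "A \<le> A'"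
  shows "gamma 3 (Kset A L) \<le> gamma 3 (Kset A' L)"
proof -
  interpret P: prob_space "gauss_meas 3" by (rule gauss_prob)
  have A': "15/8 * L \<le> A'" using A by simp
  have sub: "Kset A L \<subseteq> Kset A' L" using A by (auto simp: Kset_def)
  show ?thesis unfolding gamma_def
    apply (rule P.finite_measure_mono)
    using sub apply blast
    unfolding Kset_eq[OF L A'] by (rule gm3_meas_set[OF SK_sets])
qed


lemma B2_mem: "x \<in> B2 3 r \<longleftrightarrow> x \<in> Rn 3 \<and> sqrt ((x 0)\<^sup>2 + (x 1)\<^sup>2 + (x 2)\<^sup>2) \<le> r"
  by (simp add: B2_def cball_n_def enorm3)

lemma ball_sub:
  assumes a: "17 \<le> a" and r: "r \<le> 8"
  shows "B2 3 r \<subseteq> Kset a 8"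
proof
  fix x assume "x \<in> B2 3 r"
  then have xR: "x \<in> Rn 3" and N: "sqrt ((x 0)\<^sup>2 + (x 1)\<^sup>2 + (x 2)\<^sup>2) \<le> r" by (auto simp: B2_mem)
  define N where "N = sqrt ((x 0)\<^sup>2 + (x 1)\<^sup>2 + (x 2)\<^sup>2)"
  define \<rho> where "\<rho> = sqrt ((x 1)\<^sup>2 + (x 2)\<^sup>2)"
  have N8: "N \<le> 8" using N r by (simp add: N_def)
  have \<rho>0: "0 \<le> \<rho>" and N0: "0 \<le> N" by (simp_all add: \<rho>_def N_def)
  have \<rho>2: "\<rho>\<^sup>2 = (x 1)\<^sup>2 + (x 2)\<^sup>2" by (simp add: \<rho>_def)
  have N2: "N\<^sup>2 = (x 0)\<^sup>2 + \<rho>\<^sup>2" by (simp add: N_def \<rho>2 add.assoc)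
  have "\<bar>x 0\<bar> \<le> N"
  proof -
    have "sqrt ((x 0)\<^sup>2) \<le> N" unfolding N_def by (rule real_sqrt_le_mono) simp
    then show ?thesis by simp
  qed
  then have x0: "\<bar>x 0\<bar> \<le> 8" using N8 by simp
  have key: "(17 * N)\<^sup>2 - (15 * \<bar>x 0\<bar> + 8 * \<rho>)\<^sup>2 = (8 * \<bar>x 0\<bar> - 15 * \<rho>)\<^sup>2"
    using N2 by (simp add: power2_eq_square algebra_simps)
  have "(15 * \<bar>x 0\<bar> + 8 * \<rho>)\<^sup>2 \<le> (17 * N)\<^sup>2" using key by (metis diff_ge_0_iff_ge zero_le_power2)
  then have "15 * \<bar>x 0\<bar> + 8 * \<rho> \<le> 17 * N" by (rule power2_le_imp_le) (use N0 in simp)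
  then have "\<rho> \<le> a - 15/8 * \<bar>x 0\<bar>" using N8 a by linarith
  then show "x \<in> Kset a 8" using xR x0 by (simp add: Kset_def \<rho>_def)
qed

lemma sqrt_scale2: "0 \<le> u \<Longrightarrow> sqrt ((u * p)\<^sup>2 + (u * q)\<^sup>2) = u * sqrt (p\<^sup>2 + q\<^sup>2)"
proof -
  assume u: "0 \<le> u"
  have "(u * p)\<^sup>2 + (u * q)\<^sup>2 = u\<^sup>2 * (p\<^sup>2 + q\<^sup>2)" by (simp add: power_mult_distrib algebra_simps)
  then show ?thesis using u by (simp add: real_sqrt_mult)
qed

lemma Kset_convex:
  assumes x: "x \<in> Kset a L" and y: "y \<in> Kset a L" and u: "0 \<le> u" "u \<le> 1"
  shows "(\<lambda>i. u * x i + (1 - u) * y i) \<in> Kset a L"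
proof -
  let ?z = "\<lambda>i. u * x i + (1 - u) * y i"
  have xR: "x \<in> Rn 3" and yR: "y \<in> Rn 3" using x y by (auto simp: Kset_def)
  have zR: "?z \<in> Rn 3" using xR yR by (simp add: Rn_def)
  have x0: "\<bar>x 0\<bar> \<le> L" and y0: "\<bar>y 0\<bar> \<le> L" using x y by (auto simp: Kset_def)
  have xr: "sqrt ((x 1)\<^sup>2 + (x 2)\<^sup>2) \<le> a - 15/8 * \<bar>x 0\<bar>" using x by (auto simp: Kset_def)
  have yr: "sqrt ((y 1)\<^sup>2 + (y 2)\<^sup>2) \<le> a - 15/8 * \<bar>y 0\<bar>" using y by (auto simp: Kset_def)
  have u1: "0 \<le> 1 - u" using u by simp
  have z0: "\<bar>?z 0\<bar> \<le> u * \<bar>x 0\<bar> + (1 - u) * \<bar>y 0\<bar>"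
    using abs_triangle_ineq[of "u * x 0" "(1 - u) * y 0"] u u1 by (simp add: abs_mult)
  have zL: "\<bar>?z 0\<bar> \<le> L"
  proof -
    have "u * \<bar>x 0\<bar> + (1 - u) * \<bar>y 0\<bar> \<le> u * L + (1 - u) * L"
      using x0 y0 u u1 by (intro add_mono mult_left_mono) auto
    then show ?thesis using z0 by (simp add: algebra_simps)
  qed
  have "sqrt ((?z 1)\<^sup>2 + (?z 2)\<^sup>2) \<le> sqrt ((u * x 1)\<^sup>2 + (u * x 2)\<^sup>2) + sqrt (((1 - u) * y 1)\<^sup>2 + ((1 - u) * y 2)\<^sup>2)"
    by (rule real_sqrt_sum_squares_triangle_ineq)
  also have "\<dots> = u * sqrt ((x 1)\<^sup>2 + (x 2)\<^sup>2) + (1 - u) * sqrt ((y 1)\<^sup>2 + (y 2)\<^sup>2)"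
    using u u1 by (simp add: sqrt_scale2)
  also have "\<dots> \<le> u * (a - 15/8 * \<bar>x 0\<bar>) + (1 - u) * (a - 15/8 * \<bar>y 0\<bar>)"
    using xr yr u u1 by (intro add_mono mult_left_mono) auto
  also have "\<dots> = a - 15/8 * (u * \<bar>x 0\<bar> + (1 - u) * \<bar>y 0\<bar>)" by (simp add: field_simps)
  also have "\<dots> \<le> a - 15/8 * \<bar>?z 0\<bar>" using z0 by simp
  finally show ?thesis using zR zL by (simp add: Kset_def)
qed

declare continuous_on_product_coordinates[continuous_intros]

lemma closed_Rn: "closed (Rn n)"
proof -
  have "Rn n = (\<Inter>i\<in>{n..}. {x. x i = 0})" by (auto simp: Rn_def)
  moreover have "closed {x::nat \<Rightarrow> real. x i = 0}" for i
    by (intro closed_Collect_eq continuous_intros)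
  ultimately show ?thesis by auto
qed

lemma Kset_closed: "closed (Kset a L)"
proof -
  have "Kset a L = Rn 3 \<inter> {x. \<bar>x 0\<bar> \<le> L} \<inter> {x. sqrt ((x 1)\<^sup>2 + (x 2)\<^sup>2) \<le> a - 15/8 * \<bar>x 0\<bar>}"
    by (auto simp: Kset_def)
  moreover have "closed {x::nat \<Rightarrow> real. \<bar>x 0\<bar> \<le> L}"
    by (intro closed_Collect_le continuous_intros)
  moreover have "closed {x::nat \<Rightarrow> real. sqrt ((x 1)\<^sup>2 + (x 2)\<^sup>2) \<le> a - 15/8 * \<bar>x 0\<bar>}"
    by (intro closed_Collect_le continuous_intros)
  ultimately show ?thesis using closed_Rn by (auto intro: closed_Int)
qed

lemma Kset_body: "17 \<le> a \<Longrightarrow> convex_body 3 (Kset a 8)"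
proof -
  assume a: "17 \<le> a"
  have "convex_n 3 (Kset a 8)"
    unfolding convex_n_def using Kset_convex by (auto simp: Kset_def)
  moreover have "(\<lambda>_. 0) \<in> Kset a 8" using a by (simp add: Kset_def Rn_def)
  moreover have "cball_n 3 (\<lambda>_. 0) 8 \<subseteq> Kset a 8" using ball_sub[OF a, of 8] by (simp add: B2_def)
  moreover have "\<exists>r>0. cball_n 3 (\<lambda>_. 0) r \<subseteq> Kset a 8"
    using \<open>cball_n 3 (\<lambda>_. 0) 8 \<subseteq> Kset a 8\<close> by (intro exI[of _ 8]) simp
  ultimately show ?thesis unfolding convex_body_def using Kset_closed by blast
qed

lemma Kset_symm: "symmetric_set (Kset a L)"
proof -
  have neg: "- x \<in> Kset a L" if "x \<in> Kset a L" for x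
    using that by (simp add: Kset_def Rn_def)
  have "uminus ` Kset a L = Kset a L"
  proof
    show "uminus ` Kset a L \<subseteq> Kset a L" using neg by auto
    show "Kset a L \<subseteq> uminus ` Kset a L"
    proof
      fix x assume "x \<in> Kset a L"
      then have nx: "- x \<in> Kset a L" by (rule neg)
      have xx: "x = - (- x)" by (rule ext) simp
      show "x \<in> uminus ` Kset a L" using image_eqI[where f=uminus, OF xx nx] .
    qed
  qed
  then show ?thesis by (simp add: symmetric_set_def)
qed

lemma far_point:
  assumes "0 < r"
  shows "(\<lambda>i. if i = 0 then r else 0) \<in> B2 3 r"
  using assms by (simp add: B2_mem Rn_def)

lemma inradius_K: "17 \<le> a \<Longrightarrow> inradius 3 (Kset a 8) = 8"
proof -
  assume a: "17 \<le> a"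
  have "{r. r > 0 \<and> B2 3 r \<subseteq> Kset a 8} = {0<..8}"
  proof (intro set_eqI iffI)
    fix r assume "r \<in> {r. r > 0 \<and> B2 3 r \<subseteq> Kset a 8}"
    then have r: "0 < r" "B2 3 r \<subseteq> Kset a 8" by auto
    have "r \<le> 8"
    proof (rule ccontr)
      assume "\<not> r \<le> 8"
      then have "(\<lambda>i. if i = 0 then r else (0::real)) \<notin> Kset a 8" by (simp add: Kset_def)
      then show False using r far_point[OF r(1)] by auto
    qed
    then show "r \<in> {0<..8}" using r by simp
  next
    fix r assume "r \<in> {0<..(8::real)}"
    then show "r \<in> {r. r > 0 \<and> B2 3 r \<subseteq> Kset a 8}" using ball_sub[OF a] by auto
  qed
  then show ?thesis unfolding inradius_def by (simp add: cSup_greaterThanAtMost)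
qed

lemma inradius_cyl: "inradius 3 (cyl 3 8) = 8"
proof -
  have "{r. r > 0 \<and> B2 3 r \<subseteq> cyl 3 8} = {0<..8}"
  proof (intro set_eqI iffI)
    fix r assume "r \<in> {r. r > 0 \<and> B2 3 r \<subseteq> cyl 3 8}"
    then have r: "0 < r" "B2 3 r \<subseteq> cyl 3 8" by auto
    have "r \<le> 8"
    proof (rule ccontr)
      assume "\<not> r \<le> 8"
      then have "(\<lambda>i. if i = 0 then r else (0::real)) \<notin> cyl 3 8" using r by (simp add: cyl_def enorm2)
      then show False using r far_point[OF r(1)] by auto
    qed
    then show "r \<in> {0<..8}" using r by simp
  next
    fix r assume r: "r \<in> {0<..(8::real)}"
    have "B2 3 r \<subseteq> cyl 3 8"
    proof
      fix x assume "x \<in> B2 3 r"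
      then have A: "x \<in> Rn 3" "sqrt ((x 0)\<^sup>2 + (x 1)\<^sup>2 + (x 2)\<^sup>2) \<le> r" by (auto simp: B2_mem)
      have B: "sqrt ((x 0)\<^sup>2 + (x 1)\<^sup>2) \<le> sqrt ((x 0)\<^sup>2 + (x 1)\<^sup>2 + (x 2)\<^sup>2)" by (rule real_sqrt_le_mono) simp
      have "r \<le> 8" using r by simp
      then have "x \<in> Rn 3" "sqrt ((x 0)\<^sup>2 + (x 1)\<^sup>2) \<le> 8" using A B by linarith+
      then show "x \<in> cyl 3 8" by (simp add: cyl_def enorm2)
    qed
    then show "r \<in> {r. r > 0 \<and> B2 3 r \<subseteq> cyl 3 8}" using r by auto
  qed
  then show ?thesis unfolding inradius_def by (simp add: cSup_greaterThanAtMost)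
qed


theorem mainTheorem10:
  shows "\<exists>w::real. w > 0 \<and> (\<exists>n::nat. n \<ge> 3 \<and> (\<exists>K t. convex_body n K \<and> symmetric_set K
      \<and> 0 < t \<and> t < 1
      \<and> inradius n K = w
      \<and> gamma n K = gamma n (cyl n w)
      \<and> inradius n (cyl n w) = w
      \<and> gamma n (dil t (cyl n w)) = gamma 2 (B2 2 (t * w))
      \<and> gamma n (dil t K) > gamma n (dil t (cyl n w))))"
proof -
  obtain a where a: "17 \<le> a" "a \<le> 25" "gK a 8 = 1 - exp (-32)" using exists_A by blast
  define K where "K = Kset a 8"
  define t :: real where "t = 3/8"
  have body: "convex_body 3 K" unfolding K_def by (rule Kset_body[OF a(1)])
  have symm: "symmetric_set K" unfolding K_def by (rule Kset_symm)
  have inK: "inradius 3 K = 8" unfolding K_def by (rule inradius_K[OF a(1)])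
  have gC: "gamma 3 (cyl 3 8) = 1 - exp (-32)" using gamma_cyl[of 8] by simp
  have gK': "gamma 3 K = gamma 3 (cyl 3 8)" unfolding K_def gC
    using gamma_Kset[of 8 a] a by simp
  have dC: "dil t (cyl 3 8) = cyl 3 3" unfolding t_def using dil_cyl[of "3/8" 8] by simp
  have gdC: "gamma 3 (dil t (cyl 3 8)) = 1 - exp (-(9/2))" unfolding dC using gamma_cyl[of 3] by simp
  have gB: "gamma 2 (B2 2 (t * 8)) = 1 - exp (-(9/2))" unfolding t_def using gamma_B2[of 3] by simp
  have dK: "dil t K = Kset (3/8 * a) 3" unfolding K_def t_def using dil_Kset[of "3/8" a 8] by simp
  have "gamma 3 (Kset (51/8) 3) \<le> gamma 3 (Kset (3/8 * a) 3)"
    by (rule gamma_Kset_mono) (use a in auto)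
  moreover have "gamma 3 (Kset (51/8) 3) = gK (51/8) 3" by (rule gamma_Kset) auto
  ultimately have "1 - exp (-(9/2)) < gamma 3 (dil t K)" using N2 dK by simp
  then have lt: "gamma 3 (dil t (cyl 3 8)) < gamma 3 (dil t K)" using gdC by simp
  show ?thesis
    apply (rule exI[of _ 8])
    apply (intro conjI)
     apply simp
    apply (rule exI[of _ 3])
    apply (intro conjI)
     apply simp
    apply (rule exI[of _ K])
    apply (rule exI[of _ t])
    using body symm inK gK' inradius_cyl gdC gB lt by (simp add: t_def)
qed


end
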